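(* For $t>0$ and $h\ge0$ set \[ f(t,h):=\sup_{h'\ge0}\Big(\psi(h')-\frac{(h-h')^2}{8t}\Big), \] and $f(0,h):=\psi(h)$. Then $f$ is the unique viscosity solution of \[ \partial_t f - 2(\partial_h f)^2 = 0 \ \text{ in } (0,\infty)^2, \qquad -\partial_h f = 0 \ \text{ on } (0,\infty)\times\{0\}, \] that satisfies $f(0,h)=\psi(h)$ for all $h\ge0$ and is globally Lipschitz continuous in the variable $h$.
   Context: Let $P$ be a probability measure on $\mathbb{R}$ with bounded support. Let $\bar x_1$ have law $P$ and $z_1$ be a standard Gaussian independent of $\bar x_1$, and define for $h\ge0$ \[ \psi(h):=\mathbb{E}\log\int_{\mathbb{R}}\exp\Big(\sqrt h\, z_1x+hx\bar x_1-\tfrac h2x^2\Big)\,dP(x). \] Viscosity solutions: $f\in C([0,\infty)^2)$ is a viscosity subsolution if for every $(t,h)\in(0,\infty)\times[0,\infty)$ and $\phi\in C^\infty((0,\infty)\times[0,\infty))$ such that $f-\phi$ has a local maximum at $(t,h)$, we have $(\partial_t\phi-2(\partial_h\phi)^2)(t,h)\le0$ if $h>0$, and $\min(-\partial_h\phi,\partial_t\phi-2(\partial_h\phi)^2)(t,h)\le0$ if $h=0$. It is a viscosity supersolution if for every such $(t,h),\phi$ with $f-\phi$ having a local minimum at $(t,h)$, we have $(\partial_t\phi-2(\partial_h\phi)^2)(t,h)\ge0$ if $h>0$, and $\max(-\partial_h\phi,\partial_t\phi-2(\partial_h\phi)^2)(t,h)\ge0$ if $h=0$. A viscosity solution is both.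 *)

theory Defs
  imports "HOL-Analysis.Analysis" "HOL-Probability.Probability"
begin

definition std_gaussian :: "real measure" where
  "std_gaussian = density lborel std_normal_density"

definition psi :: "real measure \<Rightarrow> real \<Rightarrow> real" where
  "psi P h = (\<integral>w. ln (\<integral>x. exp (sqrt h * snd w * x + h * x * fst w - h / 2 * x\<^sup>2) \<partial>P)
                \<partial>(P \<Otimes>\<^sub>M std_gaussian))"

definition pdt :: "(real \<times> real \<Rightarrow> real) \<Rightarrow> real \<times> real \<Rightarrow> real" where
  "pdt \<phi> = (\<lambda>(t, h). deriv (\<lambda>s. \<phi> (s, h)) t)"

definition pdh :: "(real \<times> real \<Rightarrow> real) \<Rightarrow> real \<times> real \<Rightarrow> real" where
  "pdh \<phi> = (\<lambda>(t, h). deriv (\<lambda>s. \<phi> (t, s)) h)"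

fun iter_pd :: "bool list \<Rightarrow> (real \<times> real \<Rightarrow> real) \<Rightarrow> real \<times> real \<Rightarrow> real" where
  "iter_pd [] \<phi> = \<phi>"
| "iter_pd (b # bs) \<phi> = (if b then pdt else pdh) (iter_pd bs \<phi>)"

definition smooth2 :: "(real \<times> real \<Rightarrow> real) \<Rightarrow> bool" where
  "smooth2 \<phi> \<longleftrightarrow> (\<forall>bs. continuous_on UNIV (iter_pd bs \<phi>) \<and>
      (\<forall>t h. (\<lambda>s. iter_pd bs \<phi> (s, h)) differentiable (at t) \<and>
             (\<lambda>s. iter_pd bs \<phi> (t, s)) differentiable (at h)))"


definition local_max_at :: "(real \<times> real \<Rightarrow> real) \<Rightarrow> real \<times> real \<Rightarrow> bool" where
  "local_max_at g p \<longleftrightarrow> (\<exists>e>0. \<forall>y \<in> {0<..} \<times> {0..}. dist y p < e \<longrightarrow> g y \<le> g p)"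

definition local_min_at :: "(real \<times> real \<Rightarrow> real) \<Rightarrow> real \<times> real \<Rightarrow> bool" where
  "local_min_at g p \<longleftrightarrow> (\<exists>e>0. \<forall>y \<in> {0<..} \<times> {0..}. dist y p < e \<longrightarrow> g y \<ge> g p)"

definition viscosity_subsolution :: "(real \<times> real \<Rightarrow> real) \<Rightarrow> bool" where
  "viscosity_subsolution f \<longleftrightarrow> continuous_on ({0..} \<times> {0..}) f \<and>
     (\<forall>t h \<phi>. t > 0 \<and> h \<ge> 0 \<and> smooth2 \<phi> \<and> local_max_at (\<lambda>y. f y - \<phi> y) (t, h) \<longrightarrow>
        (if h > 0 then pdt \<phi> (t, h) - 2 * (pdh \<phi> (t, h))\<^sup>2 \<le> 0
         else min (- pdh \<phi> (t, h)) (pdt \<phi> (t, h) - 2 * (pdh \<phi> (t, h))\<^sup>2) \<le> 0))"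

definition viscosity_supersolution :: "(real \<times> real \<Rightarrow> real) \<Rightarrow> bool" where
  "viscosity_supersolution f \<longleftrightarrow> continuous_on ({0..} \<times> {0..}) f \<and>
     (\<forall>t h \<phi>. t > 0 \<and> h \<ge> 0 \<and> smooth2 \<phi> \<and> local_min_at (\<lambda>y. f y - \<phi> y) (t, h) \<longrightarrow>
        (if h > 0 then pdt \<phi> (t, h) - 2 * (pdh \<phi> (t, h))\<^sup>2 \<ge> 0
         else max (- pdh \<phi> (t, h)) (pdt \<phi> (t, h) - 2 * (pdh \<phi> (t, h))\<^sup>2) \<ge> 0))"

definition viscosity_solution :: "(real \<times> real \<Rightarrow> real) \<Rightarrow> bool" where
  "viscosity_solution f \<longleftrightarrow> viscosity_subsolution f \<and> viscosity_supersolution f"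

definition lipschitz_in_h :: "(real \<times> real \<Rightarrow> real) \<Rightarrow> bool" where
  "lipschitz_in_h f \<longleftrightarrow> (\<exists>L. \<forall>t\<ge>0. \<forall>h\<ge>0. \<forall>h'\<ge>0. \<bar>f (t, h) - f (t, h')\<bar> \<le> L * \<bar>h - h'\<bar>)"

definition hopf_lax :: "real measure \<Rightarrow> real \<times> real \<Rightarrow> real" where
  "hopf_lax P = (\<lambda>(t, h). if t = 0 then psi P h
       else (SUP h'\<in>{0..}. psi P h' - (h - h')\<^sup>2 / (8 * t)))"

end

theory Submission
  imports Defs "HOL-Probability.Hoeffding"
begin

definition quad :: "real \<Rightarrow> real \<Rightarrow> real \<Rightarrow> real \<Rightarrow> real \<Rightarrow> real \<Rightarrow> real \<Rightarrow> real \<times> real \<Rightarrow> real" where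
  "quad a b c d e t0 h0 = (\<lambda>(t,h). a + b*(t-t0) + c*(h-h0) + d*(t-t0)\<^sup>2 + e*(h-h0)\<^sup>2)"

lemma quad_deriv_t:
  "((\<lambda>s. quad a b c d e t0 h0 (s,h)) has_real_derivative (b + 2*d*(t-t0))) (at t)"
  unfolding quad_def
  by (auto intro!: derivative_eq_intros)

lemma quad_deriv_h:
  "((\<lambda>s. quad a b c d e t0 h0 (t,s)) has_real_derivative (c + 2*e*(h-h0))) (at h)"
  unfolding quad_def
  by (auto intro!: derivative_eq_intros)

lemma pdt_quad: "pdt (quad a b c d e t0 h0) = quad b (2*d) 0 0 0 t0 h0"
  unfolding pdt_def
  apply (rule ext, clarify)
  apply (subst DERIV_imp_deriv[OF quad_deriv_t])
  apply (simp add: quad_def)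
  done

lemma pdh_quad: "pdh (quad a b c d e t0 h0) = quad c 0 (2*e) 0 0 t0 h0"
  unfolding pdh_def
  apply (rule ext, clarify)
  apply (subst DERIV_imp_deriv[OF quad_deriv_h])
  apply (simp add: quad_def)
  done

lemma iter_pd_quad: "\<exists>a b c d e. iter_pd bs (quad a0 b0 c0 d0 e0 t0 h0) = quad a b c d e t0 h0"
proof (induction bs)
  case Nil
  then show ?case by (intro exI) simp
next
  case (Cons x bs)
  then obtain a b c d e where eq: "iter_pd bs (quad a0 b0 c0 d0 e0 t0 h0) = quad a b c d e t0 h0" by blast
  show ?case
  proof (cases x)
    case True
    then have "iter_pd (x # bs) (quad a0 b0 c0 d0 e0 t0 h0) = quad b (2*d) 0 0 0 t0 h0"
      using eq by (simp only: iter_pd.simps if_True pdt_quad)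
    then show ?thesis by blast
  next
    case False
    then have "iter_pd (x # bs) (quad a0 b0 c0 d0 e0 t0 h0) = quad c 0 (2*e) 0 0 t0 h0"
      using eq by (simp only: iter_pd.simps if_False pdh_quad)
    then show ?thesis by blast
  qed
qed

lemma quad_cont: "continuous_on UNIV (quad a b c d e t0 h0)"
  unfolding quad_def split_def by (intro continuous_intros)

lemma smooth2_quad: "smooth2 (quad a b c d e t0 h0)"
  unfolding smooth2_def
proof (intro allI conjI)
  fix bs t h
  obtain a' b' c' d' e' where eq: "iter_pd bs (quad a b c d e t0 h0) = quad a' b' c' d' e' t0 h0"
    using iter_pd_quad by blast
  show "continuous_on UNIV (iter_pd bs (quad a b c d e t0 h0))" unfolding eq by (rule quad_cont)
  show "(\<lambda>s. iter_pd bs (quad a b c d e t0 h0) (s, h)) differentiable at t"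
    unfolding eq using quad_deriv_t real_differentiable_def by blast
  show "(\<lambda>s. iter_pd bs (quad a b c d e t0 h0) (t, s)) differentiable at h"
    unfolding eq using quad_deriv_h real_differentiable_def by blast
qed

lemma pdt_quad_at: "pdt (quad a b c d e t0 h0) (t0,h0) = b"
  unfolding pdt_quad by (simp add: quad_def)
lemma pdh_quad_at: "pdh (quad a b c d e t0 h0) (t0,h0) = c"
  unfolding pdh_quad by (simp add: quad_def)

lemma smooth2_deriv_t:
  assumes "smooth2 \<phi>"
  shows "((\<lambda>s. \<phi> (s,h)) has_real_derivative pdt \<phi> (t,h)) (at t)"
proof -
  have "(\<lambda>s. iter_pd [] \<phi> (s, h)) differentiable (at t)" using assms unfolding smooth2_def by blast
  then show ?thesis unfolding pdt_def by (simp add: DERIV_deriv_iff_real_differentiable)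
qed

lemma smooth2_deriv_h:
  assumes "smooth2 \<phi>"
  shows "((\<lambda>s. \<phi> (t,s)) has_real_derivative pdh \<phi> (t,h)) (at h)"
proof -
  have "(\<lambda>s. iter_pd [] \<phi> (t, s)) differentiable (at h)" using assms unfolding smooth2_def by blast
  then show ?thesis unfolding pdh_def by (simp add: DERIV_deriv_iff_real_differentiable)
qed

lemma smooth2_cont_pdh:
  assumes "smooth2 \<phi>" shows "continuous_on UNIV (pdh \<phi>)"
proof -
  have "continuous_on UNIV (iter_pd [False] \<phi>)" using assms unfolding smooth2_def by blast
  then show ?thesis by simp
qed

lemma smooth2_cont_pdt:
  assumes "smooth2 \<phi>" shows "continuous_on UNIV (pdt \<phi>)"
proof -
  have "continuous_on UNIV (iter_pd [True] \<phi>)" using assms unfolding smooth2_def by blast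
  then show ?thesis by simp
qed

lemma smooth2_cont:
  assumes "smooth2 \<phi>" shows "continuous_on UNIV \<phi>"
proof -
  have "continuous_on UNIV (iter_pd [] \<phi>)" using assms unfolding smooth2_def by blast
  then show ?thesis by simp
qed

lemma real_le_from_eps:
  fixes c B M e :: real
  assumes "e > 0" and H: "\<And>\<epsilon>. 0 < \<epsilon> \<Longrightarrow> \<epsilon> < e \<Longrightarrow> c \<le> B + M*\<epsilon>"
  shows "c \<le> B"
proof (rule ccontr)
  assume "\<not> c \<le> B"
  define \<epsilon> where "\<epsilon> = min (e/2) ((c-B)/(2*(\<bar>M\<bar>+1)))"
  have pos: "0 < \<epsilon>" using \<open>\<not> c \<le> B\<close> assms(1) by (simp add: \<epsilon>_def)
  have "\<epsilon> < e" using assms(1) by (simp add: \<epsilon>_def)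
  then have "c \<le> B + M*\<epsilon>" using H pos by blast
  moreover have "M*\<epsilon> \<le> \<bar>M\<bar> * \<epsilon>" using pos by (simp add: abs_ge_self mult_right_mono)
  moreover have "\<bar>M\<bar> * \<epsilon> \<le> \<bar>M\<bar> * ((c-B)/(2*(\<bar>M\<bar>+1)))"
    by (intro mult_left_mono) (auto simp: \<epsilon>_def)
  moreover have "\<bar>M\<bar> * ((c-B)/(2*(\<bar>M\<bar>+1))) < c - B"
  proof -
    have "\<bar>M\<bar> * (c-B) < 2*(\<bar>M\<bar>+1) * (c - B)" using \<open>\<not> c \<le> B\<close>
      by (intro mult_strict_right_mono) auto
    then show ?thesis by (simp add: field_simps)
  qed
  ultimately show False by linarith
qed

lemma dist_t: "dist (t, h::real) (t0, h) = \<bar>t - (t0::real)\<bar>"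
  by (simp add: dist_Pair_Pair dist_real_def)
lemma dist_h: "dist (t::real, h) (t, h0) = \<bar>h - (h0::real)\<bar>"
  by (simp add: dist_Pair_Pair dist_real_def)

lemma sub_env:
  assumes sub: "viscosity_subsolution u" and t0: "t0 > 0" and h0: "h0 \<ge> 0" and e: "e > 0"
    and H: "\<And>t h. t > 0 \<Longrightarrow> h \<ge> 0 \<Longrightarrow> dist (t,h) (t0,h0) < e \<Longrightarrow>
        u (t,h) - u (t0,h0) \<le> A*(t-t0) + B*(h-h0) + M*((t-t0)\<^sup>2+(h-h0)\<^sup>2)"
  shows "(h0 > 0 \<longrightarrow> A - 2*B\<^sup>2 \<le> 0) \<and> (h0 = 0 \<longrightarrow> min (-B) (A - 2*B\<^sup>2) \<le> 0)"
proof -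
  define \<phi> where "\<phi> = quad (u (t0,h0)) A B M M t0 h0"
  have sm: "smooth2 \<phi>" unfolding \<phi>_def by (rule smooth2_quad)
  have lm: "local_max_at (\<lambda>y. u y - \<phi> y) (t0,h0)"
    unfolding local_max_at_def
  proof (intro exI[of _ e] conjI ballI impI)
    show "0 < e" by (rule e)
    fix y assume y: "y \<in> {0<..} \<times> {0..}" and d: "dist y (t0, h0) < e"
    obtain t h where yy: "y = (t,h)" by (cases y)
    have "u (t,h) - u (t0,h0) \<le> A*(t-t0) + B*(h-h0) + M*((t-t0)\<^sup>2+(h-h0)\<^sup>2)"
      using H y d yy by auto
    then show "u y - \<phi> y \<le> u (t0, h0) - \<phi> (t0, h0)"
      unfolding yy \<phi>_def quad_def by (simp add: algebra_simps)
  qed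
  have "if h0 > 0 then pdt \<phi> (t0, h0) - 2 * (pdh \<phi> (t0, h0))\<^sup>2 \<le> 0
         else min (- pdh \<phi> (t0, h0)) (pdt \<phi> (t0, h0) - 2 * (pdh \<phi> (t0, h0))\<^sup>2) \<le> 0"
    using sub t0 h0 sm lm unfolding viscosity_subsolution_def by blast
  moreover have "pdt \<phi> (t0,h0) = A" "pdh \<phi> (t0,h0) = B"
    unfolding \<phi>_def by (rule pdt_quad_at, rule pdh_quad_at)
  ultimately show ?thesis using h0 by (auto split: if_splits)
qed

lemma super_env:
  assumes sup: "viscosity_supersolution v" and t0: "t0 > 0" and h0: "h0 \<ge> 0" and e: "e > 0"
    and H: "\<And>t h. t > 0 \<Longrightarrow> h \<ge> 0 \<Longrightarrow> dist (t,h) (t0,h0) < e \<Longrightarrow>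
        v (t,h) - v (t0,h0) \<ge> A*(t-t0) + B*(h-h0) - M*((t-t0)\<^sup>2+(h-h0)\<^sup>2)"
  shows "(h0 > 0 \<longrightarrow> A - 2*B\<^sup>2 \<ge> 0) \<and> (h0 = 0 \<longrightarrow> max (-B) (A - 2*B\<^sup>2) \<ge> 0)"
proof -
  define \<phi> where "\<phi> = quad (v (t0,h0)) A B (-M) (-M) t0 h0"
  have sm: "smooth2 \<phi>" unfolding \<phi>_def by (rule smooth2_quad)
  have lm: "local_min_at (\<lambda>y. v y - \<phi> y) (t0,h0)"
    unfolding local_min_at_def
  proof (intro exI[of _ e] conjI ballI impI)
    show "0 < e" by (rule e)
    fix y assume y: "y \<in> {0<..} \<times> {0..}" and d: "dist y (t0, h0) < e"
    obtain t h where yy: "y = (t,h)" by (cases y)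
    have "v (t,h) - v (t0,h0) \<ge> A*(t-t0) + B*(h-h0) - M*((t-t0)\<^sup>2+(h-h0)\<^sup>2)"
      using H y d yy by auto
    then show "v y - \<phi> y \<ge> v (t0, h0) - \<phi> (t0, h0)"
      unfolding yy \<phi>_def quad_def by (simp add: algebra_simps)
  qed
  have "if h0 > 0 then pdt \<phi> (t0, h0) - 2 * (pdh \<phi> (t0, h0))\<^sup>2 \<ge> 0
         else max (- pdh \<phi> (t0, h0)) (pdt \<phi> (t0, h0) - 2 * (pdh \<phi> (t0, h0))\<^sup>2) \<ge> 0"
    using sup t0 h0 sm lm unfolding viscosity_supersolution_def by blast
  moreover have "pdt \<phi> (t0,h0) = A" "pdh \<phi> (t0,h0) = B"
    unfolding \<phi>_def by (rule pdt_quad_at, rule pdh_quad_at)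
  ultimately show ?thesis using h0 by (auto split: if_splits)
qed

lemma sub_lip:
  fixes u :: "real \<times> real \<Rightarrow> real"
  assumes t0: "t0 > 0" and h0: "h0 \<ge> 0" and e: "e > 0"
    and H: "\<And>t h. t > 0 \<Longrightarrow> h \<ge> 0 \<Longrightarrow> dist (t,h) (t0,h0) < e \<Longrightarrow>
        u (t,h) - u (t0,h0) \<le> A*(t-t0) + B*(h-h0) + M*((t-t0)\<^sup>2+(h-h0)\<^sup>2)"
    and L: "\<And>h. h \<ge> 0 \<Longrightarrow> \<bar>u (t0,h) - u (t0,h0)\<bar> \<le> L*\<bar>h - h0\<bar>"
  shows "-L \<le> B" and "h0 > 0 \<Longrightarrow> B \<le> L"
proof -
  show "-L \<le> B"
  proof (rule real_le_from_eps[OF e])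
    fix \<epsilon> :: real assume p: "0 < \<epsilon>" "\<epsilon> < e"
    have "u (t0,h0+\<epsilon>) - u (t0,h0) \<le> B*\<epsilon> + M*\<epsilon>\<^sup>2"
      using H[of t0 "h0+\<epsilon>"] t0 h0 p by (simp add: dist_h)
    moreover have "-L*\<epsilon> \<le> u (t0,h0+\<epsilon>) - u (t0,h0)"
      using L[of "h0+\<epsilon>"] h0 p by auto
    ultimately have "(-L)*\<epsilon> \<le> (B + M*\<epsilon>)*\<epsilon>" by (simp add: power2_eq_square algebra_simps)
    then show "-L \<le> B + M*\<epsilon>" using p mult_right_le_imp_le by blast
  qed
  assume hp: "h0 > 0"
  have e': "min e h0 > 0" using e hp by simp
  have "B \<le> L + M*0" 
  proof -
    have "B \<le> L"
    proof (rule real_le_from_eps[OF e'])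
      fix \<epsilon> :: real assume p: "0 < \<epsilon>" "\<epsilon> < min e h0"
      have "u (t0,h0-\<epsilon>) - u (t0,h0) \<le> -B*\<epsilon> + M*\<epsilon>\<^sup>2"
        using H[of t0 "h0-\<epsilon>"] t0 h0 p by (simp add: dist_h)
      moreover have "-L*\<epsilon> \<le> u (t0,h0-\<epsilon>) - u (t0,h0)"
        using L[of "h0-\<epsilon>"] h0 p by auto
      ultimately have "B*\<epsilon> \<le> (L + M*\<epsilon>)*\<epsilon>" by (simp add: power2_eq_square algebra_simps)
      then show "B \<le> L + M*\<epsilon>" using p mult_right_le_imp_le by blast
    qed
    then show ?thesis by simp
  qed
  then show "B \<le> L" by simp
qed

lemma super_lip:
  fixes v :: "real \<times> real \<Rightarrow> real"
  assumes t0: "t0 > 0" and h0: "h0 \<ge> 0" and e: "e > 0"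
    and H: "\<And>t h. t > 0 \<Longrightarrow> h \<ge> 0 \<Longrightarrow> dist (t,h) (t0,h0) < e \<Longrightarrow>
        v (t,h) - v (t0,h0) \<ge> A*(t-t0) + B*(h-h0) - M*((t-t0)\<^sup>2+(h-h0)\<^sup>2)"
    and L: "\<And>h. h \<ge> 0 \<Longrightarrow> \<bar>v (t0,h) - v (t0,h0)\<bar> \<le> L*\<bar>h - h0\<bar>"
  shows "B \<le> L" and "h0 > 0 \<Longrightarrow> -L \<le> B"
proof -
  have "-L \<le> -B" 
    by (rule sub_lip(1)[OF t0 h0 e, of "\<lambda>y. - v y" "-A" "-B" M])
       (use H L in \<open>auto simp: algebra_simps abs_minus_commute\<close>)
  then show "B \<le> L" by simp
  assume "h0 > 0"
  have "-B \<le> L" 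
    by (rule sub_lip(2)[OF t0 h0 e, of "\<lambda>y. - v y" "-A" "-B" M])
       (use H L \<open>h0 > 0\<close> in \<open>auto simp: algebra_simps abs_minus_commute\<close>)
  then show "-L \<le> B" by simp
qed

definition bb :: "real \<Rightarrow> real" where "bb h = h/(1+h)"

lemma bb_bounds: "h \<ge> 0 \<Longrightarrow> 0 \<le> bb h \<and> bb h \<le> 1"
  unfolding bb_def by auto

lemma bb_taylor:
  assumes "h \<ge> 0" "h0 \<ge> 0"
  shows "bb h - bb h0 - (h - h0)/(1+h0)\<^sup>2 \<ge> -(h-h0)\<^sup>2"
proof -
  have eq: "bb h - bb h0 - (h - h0)/(1+h0)\<^sup>2 = -(h-h0)\<^sup>2/((1+h0)\<^sup>2*(1+h))"
  proof -
    have aux: "\<And>a c::real. a > 0 \<Longrightarrow> c > 0 \<Longrightarrow> (1 - 1/a) - (1 - 1/c) - (a - c)/c\<^sup>2 = -(a-c)\<^sup>2/(c\<^sup>2*a)"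
      by (simp add: field_simps power2_eq_square)
    have b1: "bb x = 1 - 1/(1+x)" if "x \<ge> 0" for x using that unfolding bb_def by (simp add: field_simps)
    have "(1 - 1/(1+h)) - (1 - 1/(1+h0)) - ((1+h) - (1+h0))/(1+h0)\<^sup>2 = -((1+h)-(1+h0))\<^sup>2/((1+h0)\<^sup>2*(1+h))"
      by (rule aux) (use assms in auto)
    then show ?thesis using b1 assms by simp
  qed
  have a: "1 \<le> (1+h0)\<^sup>2" by (rule one_le_power) (use assms in simp)
  have b: "1 \<le> 1+h" using assms by simp
  have d: "1*1 \<le> (1+h0)\<^sup>2*(1+h)" by (rule mult_mono) (use a b in auto)
  have "(h-h0)\<^sup>2/((1+h0)\<^sup>2*(1+h)) \<le> (h-h0)\<^sup>2/1"
    by (rule divide_left_mono) (use d in auto)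
  then show ?thesis unfolding eq by simp
qed

lemma inv_taylor:
  fixes u d :: real
  assumes "u > 0" "\<bar>d\<bar> \<le> u/2"
  shows "1/(u-d) - 1/u - d/u\<^sup>2 \<le> 2*d\<^sup>2/u^3"
proof -
  have ud: "u - d \<ge> u/2" using assms by auto
  then have udp: "u - d > 0" using assms by auto
  have eq: "1/(u-d) - 1/u - d/u\<^sup>2 = d\<^sup>2/(u\<^sup>2*(u-d))"
    using assms udp by (simp add: field_simps power2_eq_square)
  have "d\<^sup>2/(u\<^sup>2*(u-d)) \<le> d\<^sup>2/(u\<^sup>2*(u/2))"
    using assms udp ud by (intro divide_left_mono mult_left_mono mult_pos_pos) auto
  also have "\<dots> = 2*d\<^sup>2/u^3" using assms by (simp add: field_simps power2_eq_square power3_eq_cube)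
  finally show ?thesis unfolding eq .
qed

definition pen :: "real \<Rightarrow> real \<Rightarrow> real \<Rightarrow> real \<Rightarrow> real \<Rightarrow> real \<Rightarrow> real \<Rightarrow> real \<Rightarrow> real \<times> real \<Rightarrow> real" where
  "pen \<alpha> \<eta> V \<gamma> \<delta> T c1 c2 = (\<lambda>(t,h). ((t-c1)\<^sup>2+(h-c2)\<^sup>2)/(2*\<alpha>) + \<eta>*(h+V*t)\<^sup>2 - \<gamma>*bb h + \<delta>/(T-t))"

lemma pen_bound:
  fixes \<alpha> \<eta> V \<gamma> \<delta> T c1 c2 t h t0 h0 :: real
  assumes "\<alpha> > 0" "\<eta> \<ge> 0" "\<gamma> \<ge> 0" "\<delta> \<ge> 0" "t0 < T" "\<bar>t - t0\<bar> \<le> (T-t0)/2" "h \<ge> 0" "h0 \<ge> 0"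
  shows "pen \<alpha> \<eta> V \<gamma> \<delta> T c1 c2 (t,h) - pen \<alpha> \<eta> V \<gamma> \<delta> T c1 c2 (t0,h0) \<le>
     ((t0-c1)/\<alpha> + 2*\<eta>*V*(h0+V*t0) + \<delta>/(T-t0)\<^sup>2)*(t-t0)
   + ((h0-c2)/\<alpha> + 2*\<eta>*(h0+V*t0) - \<gamma>/(1+h0)\<^sup>2)*(h-h0)
   + (1/(2*\<alpha>) + 2*\<eta>*(1+V\<^sup>2) + \<gamma> + 2*\<delta>/(T-t0)^3)*((t-t0)\<^sup>2+(h-h0)\<^sup>2)"
proof -
  define dt dh where "dt = t - t0" and "dh = h - h0"
  have p1: "(((t-c1)\<^sup>2+(h-c2)\<^sup>2) - ((t0-c1)\<^sup>2+(h0-c2)\<^sup>2))/(2*\<alpha>)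
     = ((t0-c1)/\<alpha>)*dt + ((h0-c2)/\<alpha>)*dh + (1/(2*\<alpha>))*(dt\<^sup>2+dh\<^sup>2)"
    using assms(1) unfolding dt_def dh_def by (simp add: field_simps power2_eq_square)
  have p2a: "\<eta>*(h+V*t)\<^sup>2 - \<eta>*(h0+V*t0)\<^sup>2 = 2*\<eta>*(h0+V*t0)*(dh + V*dt) + \<eta>*(dh+V*dt)\<^sup>2"
    unfolding dt_def dh_def by (simp add: power2_eq_square algebra_simps)
  have sq: "(dh+V*dt)\<^sup>2 \<le> 2*dh\<^sup>2 + 2*V\<^sup>2*dt\<^sup>2"
  proof -
    have "0 \<le> (dh - V*dt)\<^sup>2" by simp
    then show ?thesis by (simp add: power2_eq_square algebra_simps)
  qed
  have p2: "\<eta>*(h+V*t)\<^sup>2 - \<eta>*(h0+V*t0)\<^sup>2 \<le> 2*\<eta>*V*(h0+V*t0)*dt + 2*\<eta>*(h0+V*t0)*dh + 2*\<eta>*(1+V\<^sup>2)*(dt\<^sup>2+dh\<^sup>2)"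
  proof -
    have "\<eta>*(dh+V*dt)\<^sup>2 \<le> \<eta>*(2*dh\<^sup>2 + 2*V\<^sup>2*dt\<^sup>2)" using mult_left_mono[OF sq assms(2)] .
    also have "\<dots> \<le> 2*\<eta>*(1+V\<^sup>2)*(dt\<^sup>2+dh\<^sup>2)" using assms(2)
      by (simp add: algebra_simps mult_nonneg_nonneg)
    finally show ?thesis unfolding p2a by (simp add: algebra_simps)
  qed
  have p3: "-\<gamma>*bb h + \<gamma>*bb h0 \<le> -(\<gamma>/(1+h0)\<^sup>2)*dh + \<gamma>*(dt\<^sup>2+dh\<^sup>2)"
  proof -
    have "bb h - bb h0 - (h - h0)/(1+h0)\<^sup>2 \<ge> -(h-h0)\<^sup>2" using bb_taylor assms(7,8) by blast
    then have "\<gamma>*(bb h - bb h0 - (h - h0)/(1+h0)\<^sup>2) \<ge> \<gamma>*(-(h-h0)\<^sup>2)" using mult_left_mono assms(3) by blast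
    moreover have "\<gamma>*dh\<^sup>2 \<le> \<gamma>*(dt\<^sup>2+dh\<^sup>2)" using assms(3) by (simp add: mult_left_mono)
    ultimately show ?thesis unfolding dh_def by (simp add: algebra_simps)
  qed
  have p4: "\<delta>/(T-t) - \<delta>/(T-t0) \<le> (\<delta>/(T-t0)\<^sup>2)*dt + (2*\<delta>/(T-t0)^3)*(dt\<^sup>2+dh\<^sup>2)"
  proof -
    have u: "T - t0 > 0" using assms by simp
    have "1/((T-t0)-dt) - 1/(T-t0) - dt/(T-t0)\<^sup>2 \<le> 2*dt\<^sup>2/(T-t0)^3"
      using inv_taylor[OF u, of dt] assms(6) unfolding dt_def by simp
    then have "\<delta>*(1/((T-t0)-dt) - 1/(T-t0) - dt/(T-t0)\<^sup>2) \<le> \<delta>*(2*dt\<^sup>2/(T-t0)^3)"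
      using assms(4) by (rule mult_left_mono)
    moreover have "(2*\<delta>/(T-t0)^3)*dt\<^sup>2 \<le> (2*\<delta>/(T-t0)^3)*(dt\<^sup>2+dh\<^sup>2)"
      using assms(4) u by (intro mult_left_mono) auto
    moreover have "(T-t0)-dt = T - t" unfolding dt_def by simp
    ultimately show ?thesis by (simp add: algebra_simps)
  qed
  show ?thesis
    unfolding pen_def split dt_def[symmetric] dh_def[symmetric]
    using p1 p2 p3 p4 by (simp add: algebra_simps add_divide_distrib diff_divide_distrib)
qed

lemma cont_bound:
  fixes u :: "real \<times> real \<Rightarrow> real" and T :: real
  assumes "continuous_on ({0..} \<times> {0..}) u" 
  shows "\<exists>U. U \<ge> 0 \<and> (\<forall>t\<in>{0..T}. \<bar>u (t,0::real)\<bar> \<le> U)"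
proof -
  have "continuous_on {0..T} (\<lambda>t. u (t,0))"
    by (rule continuous_on_compose2[OF assms(1)]) (auto intro!: continuous_intros)
  then have "compact ((\<lambda>t. u (t,0)) ` {0..T})" by (rule compact_continuous_image) (simp add: compact_Icc)
  then obtain U where "\<forall>x\<in>(\<lambda>t. u (t,0)) ` {0..T}. \<bar>x\<bar> \<le> U" using compact_imp_bounded bounded_real by metis
  then show ?thesis by (intro exI[of _ "max U 0"]) auto
qed

lemma unif_cont_K:
  assumes "continuous_on ({0..} \<times> {0..}) (u :: real \<times> real \<Rightarrow> real)" "e > 0"
  shows "\<exists>d>0. \<forall>x\<in>{0..T}\<times>{0..R}. \<forall>y\<in>{0..T}\<times>{0..R}. dist y x < d \<longrightarrow> \<bar>u y - u x\<bar> < e"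
proof -
  have "continuous_on ({0..T}\<times>{0..R}) u" by (rule continuous_on_subset[OF assms(1)]) auto
  then have "uniformly_continuous_on ({0..T}\<times>{0..R}) u"
    by (intro compact_uniformly_continuous) (auto intro!: compact_Times)
  then show ?thesis unfolding uniformly_continuous_on_def dist_real_def using assms(2) by blast
qed

lemma h_bound:
  fixes \<eta> C L h :: real
  assumes "\<eta> > 0" "C \<ge> 0" "L \<ge> 0" "h \<ge> 0" "\<eta>*h\<^sup>2 \<le> C + L*h"
  shows "h \<le> 1 + (C+L)/\<eta>"
proof (cases "h \<le> 1")
  case True
  then show ?thesis using assms by (simp add: add_increasing2)
next
  case False
  then have "C + L*h \<le> (C+L)*h" using assms by (simp add: algebra_simps) (metis mult_le_cancel_left1 less_eq_real_def not_le)
  then have "(\<eta>*h)*h \<le> (C+L)*h" using assms(5) by (simp add: power2_eq_square algebra_simps)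
  then have "\<eta>*h \<le> C+L" using False by (simp add: mult_le_cancel_right)
  then have "h \<le> (C+L)/\<eta>" using assms(1) by (simp add: field_simps)
  then show ?thesis by simp
qed

lemma quad_max: 
  fixes \<eta> L k :: real
  assumes "\<eta> > 0"
  shows "L*k - \<eta>*k\<^sup>2 \<le> L\<^sup>2/(4*\<eta>)"
proof -
  have "0 \<le> (2*\<eta>*k - L)\<^sup>2" by simp
  then have "4*\<eta>*(L*k - \<eta>*k\<^sup>2) \<le> L\<^sup>2" by (simp add: power2_eq_square algebra_simps)
  then show ?thesis using assms by (simp add: field_simps mult.commute)
qed

lemma final_alg:
  fixes A Ab B Bb \<Lambda> a b \<eta> V Xa Xb \<delta> Da Db \<gamma> wa wb :: real
  assumes "A \<le> 2*B\<^sup>2" "Ab \<ge> 2*Bb\<^sup>2" "\<bar>B\<bar> \<le> \<Lambda>" "\<bar>Bb\<bar> \<le> \<Lambda>"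
    and "A = a + 2*\<eta>*V*Xa + Da" "Ab = a - 2*\<eta>*V*Xb - Db"
    and "B = b + 2*\<eta>*Xa - \<gamma>*wa" "Bb = b - 2*\<eta>*Xb + \<gamma>*wb"
    and "Xa \<ge> 0" "Xb \<ge> 0" "0 \<le> wa" "wa \<le> 1" "0 \<le> wb" "wb \<le> 1" "\<eta> \<ge> 0" "\<gamma> \<ge> 0" "V = 4*\<Lambda>"
  shows "Da + Db \<le> 8*\<Lambda>*\<gamma>"
proof -
  have e1: "A - Ab = 2*\<eta>*V*(Xa+Xb) + Da + Db" using assms by (simp add: algebra_simps)
  have e2: "A - Ab \<le> 2*(B-Bb)*(B+Bb)" using assms(1,2) by (simp add: power2_eq_square algebra_simps)
  have "2*(B-Bb)*(B+Bb) \<le> 2*(\<bar>B-Bb\<bar>*\<bar>B+Bb\<bar>)"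
  proof -
    have "(B-Bb)*(B+Bb) \<le> \<bar>(B-Bb)*(B+Bb)\<bar>" by (rule abs_ge_self)
    then have "(B-Bb)*(B+Bb) \<le> \<bar>B-Bb\<bar>*\<bar>B+Bb\<bar>" by (simp only: abs_mult)
    moreover have "2*(B-Bb)*(B+Bb) = 2*((B-Bb)*(B+Bb))" by (rule mult.assoc)
    ultimately show ?thesis by linarith
  qed
  moreover have bm: "\<bar>B-Bb\<bar> \<le> 2*\<eta>*(Xa+Xb) + 2*\<gamma>"
  proof -
    have "B - Bb = 2*\<eta>*(Xa+Xb) - \<gamma>*(wa+wb)" using assms by (simp add: algebra_simps)
    moreover have "0 \<le> \<gamma>*(wa+wb)" using assms by simp
    moreover have "\<gamma>*(wa+wb) \<le> \<gamma>*2" using assms(12,14,16) by (intro mult_left_mono) auto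
    moreover have "0 \<le> 2*\<eta>*(Xa+Xb)" using assms by simp
    ultimately show ?thesis by linarith
  qed
  moreover have bp: "\<bar>B+Bb\<bar> \<le> 2*\<Lambda>" using assms(3,4) by linarith
  moreover have "0 \<le> 2*\<eta>*(Xa+Xb) + 2*\<gamma>" using assms by simp
  ultimately have "2*(B-Bb)*(B+Bb) \<le> 2*((2*\<eta>*(Xa+Xb) + 2*\<gamma>)*(2*\<Lambda>))"
    using mult_mono[OF bm bp _ abs_ge_zero] by linarith
  then have "2*\<eta>*V*(Xa+Xb) + Da + Db \<le> 2*((2*\<eta>*(Xa+Xb) + 2*\<gamma>)*(2*\<Lambda>))" using e1 e2 by linarith
  then show ?thesis using assms(17) by (simp add: algebra_simps)
qed

theorem comparison:
  fixes u v :: "real \<times> real \<Rightarrow> real"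
  assumes sub: "viscosity_subsolution u" and sup: "viscosity_supersolution v"
    and Lu: "\<And>t h h'. t \<ge> 0 \<Longrightarrow> h \<ge> 0 \<Longrightarrow> h' \<ge> 0 \<Longrightarrow> \<bar>u (t,h) - u (t,h')\<bar> \<le> Lu * \<bar>h - h'\<bar>"
    and Lv: "\<And>t h h'. t \<ge> 0 \<Longrightarrow> h \<ge> 0 \<Longrightarrow> h' \<ge> 0 \<Longrightarrow> \<bar>v (t,h) - v (t,h')\<bar> \<le> Lv * \<bar>h - h'\<bar>"
    and init: "\<And>h. h \<ge> 0 \<Longrightarrow> u (0,h) \<le> v (0,h)"
    and t0: "t0 \<ge> 0" and h0: "h0 \<ge> 0"
  shows "u (t0,h0) \<le> v (t0,h0)"
proof (rule ccontr)
  assume neg: "\<not> u (t0,h0) \<le> v (t0,h0)"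
  define \<mu> where "\<mu> = u (t0,h0) - v (t0,h0)"
  have mu: "\<mu> > 0" using neg by (simp add: \<mu>_def)
  have t0p: "t0 > 0" using init[OF h0] neg t0 by (cases "t0 = 0") auto
  have cu: "continuous_on ({0..} \<times> {0..}) u" using sub unfolding viscosity_subsolution_def by blast
  have cv: "continuous_on ({0..} \<times> {0..}) v" using sup unfolding viscosity_supersolution_def by blast
  define \<Lambda> where "\<Lambda> = max (max Lu Lv) 0 + 1"
  have Lam: "\<Lambda> \<ge> 1" "Lu \<le> \<Lambda>" "Lv \<le> \<Lambda>" unfolding \<Lambda>_def by auto
  define V where "V = 4*\<Lambda>"
  have Vp: "V > 0" using Lam by (simp add: V_def)
  define T where "T = t0 + 1"
  have Tp: "T \<ge> 1" "t0 < T" "T - t0 = 1" using t0 by (auto simp: T_def)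
  define \<delta> where "\<delta> = \<mu>/16"
  have dp: "\<delta> > 0" using mu by (simp add: \<delta>_def)
  define \<gamma> where "\<gamma> = \<delta>/(8*\<Lambda>*T\<^sup>2)"
  have gp: "\<gamma> > 0" using dp Lam Tp by (simp add: \<gamma>_def)
  have g8: "8*\<Lambda>*\<gamma> = \<delta>/T\<^sup>2" using Lam Tp by (simp add: \<gamma>_def field_simps)
  have gsmall: "2*\<gamma> \<le> \<mu>/64"
  proof -
    have T2: "1 \<le> T\<^sup>2" using Tp by (intro one_le_power) auto
    have "1*1 \<le> \<Lambda>*T\<^sup>2" by (rule mult_mono) (use Lam T2 in auto)
    then have "8*\<Lambda>*T\<^sup>2 \<ge> 8" by simp
    then have "\<gamma> \<le> \<delta>/8" unfolding \<gamma>_def using dp by (intro divide_left_mono) auto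
    then show ?thesis unfolding \<delta>_def by simp
  qed
  define \<eta> where "\<eta> = min (\<gamma>/(8*V*T)) (\<mu>/(16*((h0+V*t0)\<^sup>2+1)))"
  have "(h0+V*t0)\<^sup>2 + 1 > 0" by (simp add: add_nonneg_pos)
  then have ep: "\<eta> > 0" unfolding \<eta>_def using gp Vp Tp mu by (auto intro!: divide_pos_pos)
  have etaA: "8*\<eta>*V*T \<le> \<gamma>"
  proof -
    have "\<eta> \<le> \<gamma>/(8*V*T)" unfolding \<eta>_def by simp
    then show ?thesis using Vp Tp by (simp add: field_simps)
  qed
  have etaB: "2*\<eta>*(h0+V*t0)\<^sup>2 \<le> \<mu>/8"
  proof -
    have "\<eta> \<le> \<mu>/(16*((h0+V*t0)\<^sup>2+1))" unfolding \<eta>_def by simp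
    then have "\<eta>*(16*((h0+V*t0)\<^sup>2+1)) \<le> \<mu>" by (simp add: field_simps add_pos_nonneg)
    then show ?thesis using ep by (simp add: algebra_simps)
  qed
  obtain U0 where U0: "U0 \<ge> 0" "\<And>t. t\<in>{0..T} \<Longrightarrow> \<bar>u (t,0)\<bar> \<le> U0" using cont_bound[OF cu] by blast
  obtain V0 where V0: "V0 \<ge> 0" "\<And>t. t\<in>{0..T} \<Longrightarrow> \<bar>v (t,0)\<bar> \<le> V0" using cont_bound[OF cv] by blast
  define C1 where "C1 = U0 + V0 + 2*\<gamma>"
  have C1p: "C1 \<ge> 0" using U0 V0 gp by (simp add: C1_def)
  define R where "R = 1 + ((C1 + \<Lambda>\<^sup>2/(4*\<eta>)) + \<Lambda>)/\<eta>"
  have Rp: "R \<ge> 1" using C1p ep Lam by (simp add: R_def)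
  define C2 where "C2 = C1 + 2*\<Lambda>*R"
  have C2p: "C2 > 0" using C1p Lam Rp by (simp add: C2_def add_nonneg_pos)
  define \<theta> where "\<theta> = \<delta>/C2"
  have thp: "\<theta> > 0" using dp C2p by (simp add: \<theta>_def)
  have mu4: "\<mu>/4 > 0" using mu by simp
  obtain du where du: "du > 0" "\<And>x y. x\<in>{0..T}\<times>{0..R} \<Longrightarrow> y\<in>{0..T}\<times>{0..R} \<Longrightarrow> dist y x < du \<Longrightarrow> \<bar>u y - u x\<bar> < \<mu>/4"
    using unif_cont_K[OF cu mu4, of T R] by blast
  obtain dv where dv: "dv > 0" "\<And>x y. x\<in>{0..T}\<times>{0..R} \<Longrightarrow> y\<in>{0..T}\<times>{0..R} \<Longrightarrow> dist y x < dv \<Longrightarrow> \<bar>v y - v x\<bar> < \<mu>/4"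
    using unif_cont_K[OF cv mu4, of T R] by blast
  define d where "d = min du dv"
  have dpos: "d > 0" using du dv by (simp add: d_def)
  define \<alpha> where "\<alpha> = d\<^sup>2/(4*C2)"
  have ap: "\<alpha> > 0" using dpos C2p by (simp add: \<alpha>_def)
  have a2: "2*\<alpha>*C2 < d\<^sup>2" using dpos C2p by (simp add: \<alpha>_def field_simps)
  define rest where "rest = (\<lambda>sa ka. \<eta>*(ka+V* sa)\<^sup>2 - \<gamma>*bb ka + \<delta>/(T-sa))"
  define \<Phi> where "\<Phi> = (\<lambda>p::(real\<times>real)\<times>(real\<times>real). u (fst p) - v (snd p)
      - pen \<alpha> \<eta> V \<gamma> \<delta> T (fst (snd p)) (snd (snd p)) (fst p) - rest (fst (snd p)) (snd (snd p)))"
  have \<Phi>_eval: "\<And>t h s k. \<Phi> ((t,h),(s,k)) = u (t,h) - v (s,k) - pen \<alpha> \<eta> V \<gamma> \<delta> T s k (t,h) - rest s k"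
    by (simp add: \<Phi>_def)
  have \<Phi>_alt: "\<And>t h s k. \<Phi> ((t,h),(s,k)) = u (t,h) - v (s,k) - pen \<alpha> \<eta> V \<gamma> \<delta> T t h (s,k) - rest t h"
    by (simp add: \<Phi>_def pen_def rest_def power2_commute)
  define D where "D = ({0..<T} \<times> {0::real..}) \<times> ({0..<T} \<times> {0::real..})"
  have Ub: "\<Phi> ((t,h),(s,k)) \<le> C1 + \<Lambda>*(h+k) - \<eta>*(h\<^sup>2+k\<^sup>2) - \<delta>/(T-t) - \<delta>/(T-s) - ((t-s)\<^sup>2+(h-k)\<^sup>2)/(2*\<alpha>)"
    if "((t,h),(s,k)) \<in> D" for t h s k
  proof -
    have tt: "0 \<le> t" "t < T" "0 \<le> h" "0 \<le> s" "s < T" "0 \<le> k" using that by (auto simp: D_def)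
    have "u (t,h) - u (t,0) \<le> Lu * h" using Lu[of t h 0] tt by auto
    moreover have "Lu * h \<le> \<Lambda> * h" using Lam tt by (simp add: mult_right_mono)
    moreover have "u (t,0) \<le> U0" using U0(2)[of t] tt by auto
    ultimately have uu: "u (t,h) \<le> U0 + \<Lambda>*h" by linarith
    have "v (s,0) - v (s,k) \<le> Lv * k" using Lv[of s 0 k] tt by (auto simp: abs_minus_commute)
    moreover have "Lv * k \<le> \<Lambda> * k" using Lam tt by (simp add: mult_right_mono)
    moreover have "-v (s,0) \<le> V0" using V0(2)[of s] tt by auto
    ultimately have vv: "- v (s,k) \<le> V0 + \<Lambda>*k" by linarith
    have "h\<^sup>2 \<le> (h+V*t)\<^sup>2" using tt Vp by (intro power_mono) auto
    then have e1: "\<eta>*h\<^sup>2 \<le> \<eta>*(h+V*t)\<^sup>2" using ep by simp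
    have "k\<^sup>2 \<le> (k+V* s)\<^sup>2" using tt Vp by (intro power_mono) auto
    then have e2: "\<eta>*k\<^sup>2 \<le> \<eta>*(k+V* s)\<^sup>2" using ep by simp
    have b1: "\<gamma>*bb h \<le> \<gamma>" using bb_bounds[of h] tt gp by (simp add: mult_left_le)
    have b2: "\<gamma>*bb k \<le> \<gamma>" using bb_bounds[of k] tt gp by (simp add: mult_left_le)
    have "(t-s)\<^sup>2 = (s-t)\<^sup>2" "(h-k)\<^sup>2 = (k-h)\<^sup>2" by (simp_all add: power2_commute)
    then show ?thesis unfolding \<Phi>_eval pen_def rest_def C1_def using uu vv e1 e2 b1 b2
      by (simp add: algebra_simps)
  qed
  have coer: "h \<le> R \<and> k \<le> R \<and> t \<le> T - \<theta> \<and> s \<le> T - \<theta> \<and> (t-s)\<^sup>2+(h-k)\<^sup>2 \<le> 2*\<alpha>*C2"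
    if D: "((t,h),(s,k)) \<in> D" and nn: "\<Phi> ((t,h),(s,k)) \<ge> 0" for t h s k
  proof -
    have tt: "0 \<le> t" "t < T" "0 \<le> h" "0 \<le> s" "s < T" "0 \<le> k" using D by (auto simp: D_def)
    have n1: "\<delta>/(T-t) \<ge> 0" "\<delta>/(T-s) \<ge> 0" using tt dp by auto
    have n2: "((t-s)\<^sup>2+(h-k)\<^sup>2)/(2*\<alpha>) \<ge> 0" using ap by simp
    have S: "0 \<le> C1 + \<Lambda>*(h+k) - \<eta>*(h\<^sup>2+k\<^sup>2) - \<delta>/(T-t) - \<delta>/(T-s) - ((t-s)\<^sup>2+(h-k)\<^sup>2)/(2*\<alpha>)"
      using Ub[OF D] nn by linarith
    have qk: "\<Lambda>*k - \<eta>*k\<^sup>2 \<le> \<Lambda>\<^sup>2/(4*\<eta>)" by (rule quad_max[OF ep])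
    have qh: "\<Lambda>*h - \<eta>*h\<^sup>2 \<le> \<Lambda>\<^sup>2/(4*\<eta>)" by (rule quad_max[OF ep])
    have "\<eta>*h\<^sup>2 \<le> (C1 + \<Lambda>\<^sup>2/(4*\<eta>)) + \<Lambda>*h" using S qk n1 n2 by (simp add: algebra_simps)
    then have hR: "h \<le> R" unfolding R_def
      by (rule h_bound[OF ep _ _ tt(3), rotated -1]) (use C1p ep Lam in auto)
    have "\<eta>*k\<^sup>2 \<le> (C1 + \<Lambda>\<^sup>2/(4*\<eta>)) + \<Lambda>*k" using S qh n1 n2 by (simp add: algebra_simps)
    then have kR: "k \<le> R" unfolding R_def
      by (rule h_bound[OF ep _ _ tt(6), rotated -1]) (use C1p ep Lam in auto)
    have "\<Lambda>*h \<le> \<Lambda>*R" "\<Lambda>*k \<le> \<Lambda>*R" using hR kR Lam by (simp_all add: mult_left_mono)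
    then have "\<Lambda>*(h+k) \<le> 2*\<Lambda>*R" by (simp add: algebra_simps)
    moreover have "\<eta>*(h\<^sup>2+k\<^sup>2) \<ge> 0" using ep by simp
    ultimately have S2: "\<delta>/(T-t) + \<delta>/(T-s) + ((t-s)\<^sup>2+(h-k)\<^sup>2)/(2*\<alpha>) \<le> C2"
      using S unfolding C2_def by linarith
    have "\<delta>/(T-t) \<le> C2" using S2 n1 n2 by linarith
    then have "\<delta> \<le> C2*(T-t)" using tt by (simp add: divide_le_eq mult.commute)
    then have tb: "t \<le> T - \<theta>" unfolding \<theta>_def using C2p by (simp add: field_simps)
    have "\<delta>/(T-s) \<le> C2" using S2 n1 n2 by linarith
    then have "\<delta> \<le> C2*(T-s)" using tt by (simp add: divide_le_eq mult.commute)
    then have sb: "s \<le> T - \<theta>" unfolding \<theta>_def using C2p by (simp add: field_simps)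
    have "((t-s)\<^sup>2+(h-k)\<^sup>2)/(2*\<alpha>) \<le> C2" using S2 n1 n2 by linarith
    then have "(t-s)\<^sup>2+(h-k)\<^sup>2 \<le> 2*\<alpha>*C2" using ap by (simp add: divide_le_eq mult.commute)
    then show ?thesis using hR kR tb sb by simp
  qed
  define K where "K = ({0..T-\<theta>} \<times> {0..R}) \<times> ({0..T-\<theta>} \<times> {0..R})"
  have KD: "K \<subseteq> D" using thp unfolding K_def D_def by auto
  have Kc: "compact K" unfolding K_def by (intro compact_Times compact_Icc)
  have contP: "continuous_on K \<Phi>"
  proof -
    have c1: "continuous_on K (\<lambda>p. u (fst p))"
      by (rule continuous_on_compose2[OF cu]) (auto simp: K_def intro!: continuous_intros)
    have c2: "continuous_on K (\<lambda>p. v (snd p))"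
      by (rule continuous_on_compose2[OF cv]) (auto simp: K_def intro!: continuous_intros)
    have c3: "continuous_on K (\<lambda>p. pen \<alpha> \<eta> V \<gamma> \<delta> T (fst (snd p)) (snd (snd p)) (fst p) + rest (fst (snd p)) (snd (snd p)))"
      unfolding pen_def rest_def bb_def split_def using thp Rp ap
      by (intro continuous_intros) (auto simp: K_def add_nonneg_pos add_pos_nonneg)
    have "continuous_on K (\<lambda>p. u (fst p) - v (snd p) - (pen \<alpha> \<eta> V \<gamma> \<delta> T (fst (snd p)) (snd (snd p)) (fst p) + rest (fst (snd p)) (snd (snd p))))"
      by (intro continuous_intros c1 c2 c3)
    then show ?thesis unfolding \<Phi>_def by (simp add: algebra_simps)
  qed
  define p0 where "p0 = ((t0,h0),(t0,h0))"
  have p0D: "p0 \<in> D" using t0 h0 Tp by (simp add: p0_def D_def)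
  have Pp0: "\<Phi> p0 \<ge> 3*\<mu>/4"
  proof -
    have "\<Phi> p0 = \<mu> - 2*\<eta>*(h0+V*t0)\<^sup>2 + 2*\<gamma>*bb h0 - 2*\<delta>"
      unfolding p0_def \<Phi>_eval pen_def rest_def \<mu>_def using Tp by simp
    moreover have "\<gamma>*bb h0 \<ge> 0" using bb_bounds[OF h0] gp by simp
    ultimately show ?thesis using etaB unfolding \<delta>_def by linarith
  qed
  have p0K: "p0 \<in> K"
  proof -
    have "\<Phi> ((t0,h0),(t0,h0)) \<ge> 0" using Pp0 mu unfolding p0_def by linarith
    from coer[OF p0D[unfolded p0_def] this] show ?thesis unfolding p0_def K_def using t0 h0 by auto
  qed
  obtain P where PK: "P \<in> K" and Pmax: "\<And>y. y \<in> K \<Longrightarrow> \<Phi> y \<le> \<Phi> P"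
    using continuous_attains_sup[OF Kc _ contP] p0K by blast
  have PP: "\<Phi> P \<ge> 3*\<mu>/4" using Pmax[OF p0K] Pp0 by linarith
  have glob: "\<Phi> y \<le> \<Phi> P" if "y \<in> D" for y
  proof (cases "\<Phi> y \<ge> 0")
    case True
    obtain t h s k where y: "y = ((t,h),(s,k))" by (metis prod.collapse)
    have "y \<in> K" using coer[of t h s k] True that unfolding y K_def D_def by auto
    then show ?thesis by (rule Pmax)
  next
    case False
    then show ?thesis using PP mu by linarith
  qed
  obtain th hh s k where Pe: "P = ((th,hh),(s,k))" by (metis prod.collapse)
  have bnds: "0 \<le> th" "th \<le> T - \<theta>" "0 \<le> hh" "hh \<le> R" "0 \<le> s" "s \<le> T - \<theta>" "0 \<le> k" "k \<le> R"
    using PK unfolding Pe K_def by auto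
  have PD: "P \<in> D" using PK KD by blast
  have sq: "(th-s)\<^sup>2+(hh-k)\<^sup>2 \<le> 2*\<alpha>*C2" using coer[of th hh s k] PD PP mu unfolding Pe by auto
  have dist_small: "dist (th,hh) (s,k) < d"
  proof -
    have "dist (th,hh) (s,k) = sqrt ((th-s)\<^sup>2+(hh-k)\<^sup>2)" by (simp add: dist_Pair_Pair dist_real_def)
    also have "\<dots> < sqrt (d\<^sup>2)" using sq a2 by (intro real_sqrt_less_mono) linarith
    also have "\<dots> = d" using dpos by simp
    finally show ?thesis .
  qed
  have Pup: "\<Phi> P \<le> u (th,hh) - v (s,k) + 2*\<gamma>"
  proof -
    have "\<gamma>*bb hh \<le> \<gamma>" using bb_bounds[of hh] bnds gp by (simp add: mult_left_le)
    moreover have "\<gamma>*bb k \<le> \<gamma>" using bb_bounds[of k] bnds gp by (simp add: mult_left_le)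
    moreover have "\<delta>/(T-th) \<ge> 0" "\<delta>/(T-s) \<ge> 0" using bnds thp dp by auto
    moreover have "((th-s)\<^sup>2+(hh-k)\<^sup>2)/(2*\<alpha>) \<ge> 0" using ap by simp
    moreover have "\<eta>*(hh+V*th)\<^sup>2 \<ge> 0" "\<eta>*(k+V* s)\<^sup>2 \<ge> 0" using ep by auto
    ultimately show ?thesis unfolding Pe \<Phi>_eval pen_def rest_def by (simp add: power2_commute)
  qed
  have inKc1: "(th,hh) \<in> {0..T}\<times>{0..R}" "(s,k) \<in> {0..T}\<times>{0..R}" using bnds thp by auto
  show False
  proof (cases "th = 0 \<or> s = 0")
    case True
    then show False
    proof
      assume th0: "th = 0"
      have "u (0,hh) \<le> v (0,hh)" using init bnds by auto
      moreover have "\<bar>v (0,hh) - v (s,k)\<bar> < \<mu>/4"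
        using dv(2)[OF inKc1(2) inKc1(1)[unfolded th0]] dist_small th0 unfolding d_def by auto
      ultimately show False using Pup[unfolded th0] PP gsmall by linarith
    next
      assume s0: "s = 0"
      have "u (0,k) \<le> v (0,k)" using init bnds by auto
      moreover have "\<bar>u (th,hh) - u (0,k)\<bar> < \<mu>/4"
        using du(2)[OF inKc1(2)[unfolded s0] inKc1(1)] dist_small s0 unfolding d_def by auto
      ultimately show False using Pup[unfolded s0] PP gsmall by linarith
    qed
  next
    case False
    then have thp': "th > 0" and sp': "s > 0" using bnds by auto
    have thT: "th < T" "s < T" using bnds thp by auto
    define X1 where "X1 = hh + V*th"
    define X2 where "X2 = k + V* s"
    define w1 where "w1 = 1/(1+hh)\<^sup>2"
    define w2 where "w2 = 1/(1+k)\<^sup>2"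
    define D1 where "D1 = \<delta>/(T-th)\<^sup>2"
    define D2 where "D2 = \<delta>/(T-s)\<^sup>2"
    define a where "a = (th-s)/\<alpha>"
    define b where "b = (hh-k)/\<alpha>"
    define A where "A = a + 2*\<eta>*V*X1 + D1"
    define B where "B = b + 2*\<eta>*X1 - \<gamma>*w1"
    define M where "M = 1/(2*\<alpha>) + 2*\<eta>*(1+V\<^sup>2) + \<gamma> + 2*\<delta>/(T-th)^3"
    define A2 where "A2 = a - 2*\<eta>*V*X2 - D2"
    define B2 where "B2 = b - 2*\<eta>*X2 + \<gamma>*w2"
    define M2 where "M2 = 1/(2*\<alpha>) + 2*\<eta>*(1+V\<^sup>2) + \<gamma> + 2*\<delta>/(T-s)^3"
    define e1 where "e1 = (T-th)/2"
    define e2 where "e2 = (T-s)/2"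
    have gw1: "\<gamma>*w1 = \<gamma>/(1+hh)\<^sup>2" unfolding w1_def by simp
    have e1p: "e1 > 0" "e2 > 0" using thT by (auto simp: e1_def e2_def)
    have Hsub: "u (t,h) - u (th,hh) \<le> A*(t-th) + B*(h-hh) + M*((t-th)\<^sup>2+(h-hh)\<^sup>2)"
      if tp: "t > 0" "h \<ge> 0" "dist (t,h) (th,hh) < e1" for t h
    proof -
      have "\<bar>t - th\<bar> \<le> dist (t,h) (th,hh)" using dist_fst_le[of "(t,h)" "(th,hh)"] by (simp add: dist_real_def)
      then have tt: "\<bar>t - th\<bar> \<le> (T-th)/2" using tp unfolding e1_def by linarith
      then have "t < T" using thT abs_le_D1[OF tt] by (simp add: field_simps)
      then have "((t,h),(s,k)) \<in> D" using tp bnds thT unfolding D_def by auto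
      then have "\<Phi> ((t,h),(s,k)) \<le> \<Phi> P" by (rule glob)
      then have "u (t,h) - u (th,hh) \<le> pen \<alpha> \<eta> V \<gamma> \<delta> T s k (t,h) - pen \<alpha> \<eta> V \<gamma> \<delta> T s k (th,hh)"
        unfolding Pe \<Phi>_eval by linarith
      also have "\<dots> \<le> A*(t-th) + B*(h-hh) + M*((t-th)\<^sup>2+(h-hh)\<^sup>2)"
        unfolding A_def B_def M_def a_def b_def X1_def gw1 D1_def
        by (rule pen_bound) (use ap ep gp dp thT tt tp bnds in auto)
      finally show ?thesis .
    qed
    have Hsup: "v (t,h) - v (s,k) \<ge> A2*(t-s) + B2*(h-k) - M2*((t-s)\<^sup>2+(h-k)\<^sup>2)"
      if tp: "t > 0" "h \<ge> 0" "dist (t,h) (s,k) < e2" for t h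
    proof -
      have "\<bar>t - s\<bar> \<le> dist (t,h) (s,k)" using dist_fst_le[of "(t,h)" "(s,k)"] by (simp add: dist_real_def)
      then have tt: "\<bar>t - s\<bar> \<le> (T-s)/2" using tp unfolding e2_def by linarith
      then have "t < T" using thT abs_le_D1[OF tt] by (simp add: field_simps)
      then have "((th,hh),(t,h)) \<in> D" using tp bnds thT unfolding D_def by auto
      then have "\<Phi> ((th,hh),(t,h)) \<le> \<Phi> P" by (rule glob)
      then have "pen \<alpha> \<eta> V \<gamma> \<delta> T th hh (s,k) - pen \<alpha> \<eta> V \<gamma> \<delta> T th hh (t,h) \<le> v (t,h) - v (s,k)"
        unfolding Pe \<Phi>_alt by linarith
      moreover have "pen \<alpha> \<eta> V \<gamma> \<delta> T th hh (t,h) - pen \<alpha> \<eta> V \<gamma> \<delta> T th hh (s,k) \<le>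
          ((s-th)/\<alpha> + 2*\<eta>*V*(k+V* s) + \<delta>/(T-s)\<^sup>2)*(t-s)
        + ((k-hh)/\<alpha> + 2*\<eta>*(k+V* s) - \<gamma>/(1+k)\<^sup>2)*(h-k)
        + (1/(2*\<alpha>) + 2*\<eta>*(1+V\<^sup>2) + \<gamma> + 2*\<delta>/(T-s)^3)*((t-s)\<^sup>2+(h-k)\<^sup>2)"
        by (rule pen_bound) (use ap ep gp dp thT tt tp bnds in auto)
      moreover have "(s-th)/\<alpha> = -a" unfolding a_def by (simp add: minus_divide_left)
      moreover have "(k-hh)/\<alpha> = -b" unfolding b_def by (simp add: minus_divide_left)
      ultimately show ?thesis unfolding A2_def B2_def M2_def X2_def w2_def D2_def
        by (simp add: algebra_simps)
    qed
    have Lu': "\<And>h. h \<ge> 0 \<Longrightarrow> \<bar>u (th,h) - u (th,hh)\<bar> \<le> Lu*\<bar>h - hh\<bar>" using Lu bnds by auto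
    have Lv': "\<And>h. h \<ge> 0 \<Longrightarrow> \<bar>v (s,h) - v (s,k)\<bar> \<le> Lv*\<bar>h - k\<bar>" using Lv bnds by auto
    have sE: "(hh > 0 \<longrightarrow> A - 2*B\<^sup>2 \<le> 0) \<and> (hh = 0 \<longrightarrow> min (-B) (A - 2*B\<^sup>2) \<le> 0)"
      by (rule sub_env[OF sub thp' bnds(3) e1p(1) Hsub])
    have sL1: "-Lu \<le> B" by (rule sub_lip(1)[OF thp' bnds(3) e1p(1) Hsub Lu'])
    have sL2: "hh > 0 \<Longrightarrow> B \<le> Lu" by (rule sub_lip(2)[OF thp' bnds(3) e1p(1) Hsub Lu'])
    have pE: "(k > 0 \<longrightarrow> A2 - 2*B2\<^sup>2 \<ge> 0) \<and> (k = 0 \<longrightarrow> max (-B2) (A2 - 2*B2\<^sup>2) \<ge> 0)"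
      by (rule super_env[OF sup sp' bnds(7) e1p(2) Hsup])
    have pL1: "B2 \<le> Lv" by (rule super_lip(1)[OF sp' bnds(7) e1p(2) Hsup Lv'])
    have pL2: "k > 0 \<Longrightarrow> -Lv \<le> B2" by (rule super_lip(2)[OF sp' bnds(7) e1p(2) Hsup Lv'])
    have small1: "2*\<eta>*V*th < \<gamma>"
    proof -
      have "2*\<eta>*V*th \<le> 2*\<eta>*V*T" using ep Vp thT by (intro mult_left_mono) auto
      then show ?thesis using etaA ep Vp Tp gp by linarith
    qed
    have small2: "2*\<eta>*V* s < \<gamma>"
    proof -
      have "2*\<eta>*V* s \<le> 2*\<eta>*V*T" using ep Vp thT by (intro mult_left_mono) auto
      then show ?thesis using etaA ep Vp Tp gp by linarith
    qed
    have AB: "A \<le> 2*B\<^sup>2 \<and> \<bar>B\<bar> \<le> \<Lambda>"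
    proof (cases "hh > 0")
      case True
      then show ?thesis using sE sL1 sL2 Lam by auto
    next
      case False
      then have h0': "hh = 0" using bnds by auto
      have "b \<le> 0" unfolding b_def using h0' bnds ap by (simp add: divide_nonpos_pos)
      then have "B < 0" unfolding B_def X1_def w1_def using h0' small1 by (simp add: algebra_simps)
      then show ?thesis using sE h0' sL1 Lam by auto
    qed
    have AB2: "A2 \<ge> 2*B2\<^sup>2 \<and> \<bar>B2\<bar> \<le> \<Lambda>"
    proof (cases "k > 0")
      case True
      then show ?thesis using pE pL1 pL2 Lam by auto
    next
      case False
      then have k0: "k = 0" using bnds by auto
      have "b \<ge> 0" unfolding b_def using k0 bnds ap by simp
      then have "B2 > 0" unfolding B2_def X2_def w2_def using k0 small2 by (simp add: algebra_simps)
      then show ?thesis using pE k0 pL1 Lam by auto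
    qed
    have w1b: "0 \<le> w1" "w1 \<le> 1" unfolding w1_def using bnds by (auto simp: power_le_one_iff divide_le_eq_1) 
    have w2b: "0 \<le> w2" "w2 \<le> 1" unfolding w2_def using bnds by (auto simp: divide_le_eq_1)
    have X: "X1 \<ge> 0" "X2 \<ge> 0" unfolding X1_def X2_def using bnds Vp by auto
    have "D1 + D2 \<le> 8*\<Lambda>*\<gamma>"
      by (rule final_alg[where A=A and Ab=A2 and B=B and Bb=B2 and \<Lambda>=\<Lambda> and a=a and b=b and \<eta>=\<eta> and V=V
          and Xa=X1 and Xb=X2 and Da=D1 and Db=D2 and \<gamma>=\<gamma> and wa=w1 and wb=w2])
         (use AB AB2 X w1b w2b ep gp in \<open>auto simp: A_def A2_def B_def B2_def V_def\<close>)
    moreover have "D1 \<ge> \<delta>/T\<^sup>2"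
      unfolding D1_def using thT bnds dp by (intro divide_left_mono power_mono mult_pos_pos) auto
    moreover have "D2 \<ge> \<delta>/T\<^sup>2"
      unfolding D2_def using thT bnds dp by (intro divide_left_mono power_mono mult_pos_pos) auto
    moreover have "\<delta>/T\<^sup>2 > 0" using dp Tp by simp
    ultimately show False using g8 by linarith
  qed
qed

definition HL :: "(real \<Rightarrow> real) \<Rightarrow> real \<times> real \<Rightarrow> real" where
  "HL \<psi> = (\<lambda>(t, h). if t = 0 then \<psi> h else (SUP h'\<in>{0..}. \<psi> h' - (h - h')\<^sup>2 / (8 * t)))"

lemma hopf_lax_HL: "hopf_lax P = HL (psi P)"
  unfolding hopf_lax_def HL_def by simp

locale lipfun =
  fixes \<psi> :: "real \<Rightarrow> real" and L :: real
  assumes L0: "L \<ge> 0"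
    and lip: "\<And>x y. x \<ge> 0 \<Longrightarrow> y \<ge> 0 \<Longrightarrow> \<bar>\<psi> x - \<psi> y\<bar> \<le> L * \<bar>x - y\<bar>"
begin

lemma term_bound:
  assumes "t > 0" "h \<ge> 0" "h' \<ge> 0"
  shows "\<psi> h' - (h-h')\<^sup>2/(8*t) \<le> \<psi> h + 2*L\<^sup>2*t"
proof -
  have "\<psi> h' \<le> \<psi> h + L*\<bar>h - h'\<bar>" using lip[of h' h] assms by (simp add: abs_minus_commute)
  moreover have "L*\<bar>h - h'\<bar> - (h-h')\<^sup>2/(8*t) \<le> 2*L\<^sup>2*t"
  proof -
    have "0 \<le> (\<bar>h-h'\<bar> - 4*L*t)\<^sup>2" by simp
    then have "8*t*(L*\<bar>h - h'\<bar>) - (h-h')\<^sup>2 \<le> 16*L\<^sup>2*t\<^sup>2"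
      by (simp add: power2_eq_square algebra_simps)
    then show ?thesis using assms(1) by (simp add: field_simps power2_eq_square)
  qed
  ultimately show ?thesis by linarith
qed

lemma bdd: "t > 0 \<Longrightarrow> h \<ge> 0 \<Longrightarrow> bdd_above ((\<lambda>h'. \<psi> h' - (h-h')\<^sup>2/(8*t)) ` {0..})"
  using term_bound by (intro bdd_aboveI[of _ "\<psi> h + 2*L\<^sup>2*t"]) auto

lemma HL_pos: "t > 0 \<Longrightarrow> HL \<psi> (t,h) = (SUP h'\<in>{0..}. \<psi> h' - (h - h')\<^sup>2 / (8 * t))"
  unfolding HL_def by simp

lemma HL_ge: "t > 0 \<Longrightarrow> h \<ge> 0 \<Longrightarrow> h' \<ge> 0 \<Longrightarrow> \<psi> h' - (h-h')\<^sup>2/(8*t) \<le> HL \<psi> (t,h)"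
  unfolding HL_pos by (rule cSUP_upper[OF _ bdd]) auto

lemma HL_le: "t > 0 \<Longrightarrow> (\<And>h'. h' \<ge> 0 \<Longrightarrow> \<psi> h' - (h-h')\<^sup>2/(8*t) \<le> X) \<Longrightarrow> HL \<psi> (t,h) \<le> X"
  unfolding HL_pos by (rule cSUP_least) auto

lemma HL_ge_psi: "t \<ge> 0 \<Longrightarrow> h \<ge> 0 \<Longrightarrow> \<psi> h \<le> HL \<psi> (t,h)"
  using HL_ge[of t h h] by (cases "t = 0") (auto simp: HL_def)

lemma HL_le_psi: 
  assumes "t \<ge> 0" "h \<ge> 0" shows "HL \<psi> (t,h) \<le> \<psi> h + 2*L\<^sup>2*t"
proof (cases "t = 0")
  case True then show ?thesis unfolding HL_def by simp
next
  case False
  then have tp: "t > 0" using assms by simp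
  show ?thesis by (rule HL_le[OF tp]) (rule term_bound[OF tp assms(2)])
qed

lemma HL_zero: "HL \<psi> (0,h) = \<psi> h" unfolding HL_def by simp

lemma HL_lip_le:
  assumes t: "t > 0" and h: "0 \<le> h1" "h1 \<le> h2"
  shows "HL \<psi> (t,h1) \<le> HL \<psi> (t,h2) + L*(h2-h1)"
    and "HL \<psi> (t,h2) \<le> HL \<psi> (t,h1) + L*(h2-h1)"
proof -
  show "HL \<psi> (t,h1) \<le> HL \<psi> (t,h2) + L*(h2-h1)"
  proof (rule HL_le[OF t])
    fix h' :: real assume h': "h' \<ge> 0"
    have "\<psi> h' \<le> \<psi> (h' + (h2-h1)) + L*(h2-h1)" using lip[of h' "h'+(h2-h1)"] h h' by auto
    moreover have "(h2 - (h' + (h2-h1)))\<^sup>2/(8*t) = (h1-h')\<^sup>2/(8*t)" by (simp add: algebra_simps)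
    moreover have "\<psi> (h' + (h2-h1)) - (h2 - (h' + (h2-h1)))\<^sup>2/(8*t) \<le> HL \<psi> (t,h2)"
      using h h' by (intro HL_ge[OF t]) auto
    ultimately show "\<psi> h' - (h1-h')\<^sup>2/(8*t) \<le> HL \<psi> (t,h2) + L*(h2-h1)" by linarith
  qed
  show "HL \<psi> (t,h2) \<le> HL \<psi> (t,h1) + L*(h2-h1)"
  proof (rule HL_le[OF t])
    fix h' :: real assume h': "h' \<ge> 0"
    have nn: "(h2-h')\<^sup>2/(8*t) \<ge> 0" "(h1-h')\<^sup>2/(8*t) \<ge> 0" using t by auto
    have Lnn: "L*(h2-h1) \<ge> 0" using L0 h by simp
    consider "h' \<ge> h2" | "h1 \<le> h' \<and> h' \<le> h2" | "h' \<le> h1" by linarith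
    then show "\<psi> h' - (h2-h')\<^sup>2/(8*t) \<le> HL \<psi> (t,h1) + L*(h2-h1)"
    proof cases
      case 1
      have "\<psi> h' \<le> \<psi> (h' - (h2-h1)) + L*(h2-h1)" using lip[of h' "h'-(h2-h1)"] h h' 1 by auto
      moreover have "(h1 - (h' - (h2-h1)))\<^sup>2/(8*t) = (h2-h')\<^sup>2/(8*t)" by (simp add: algebra_simps)
      moreover have "\<psi> (h' - (h2-h1)) - (h1 - (h' - (h2-h1)))\<^sup>2/(8*t) \<le> HL \<psi> (t,h1)"
        using h h' 1 by (intro HL_ge[OF t]) auto
      ultimately show ?thesis by linarith
    next
      case 2
      have "\<psi> h' \<le> \<psi> h1 + L*(h'-h1)" using lip[of h' h1] h h' 2 by auto
      moreover have "L*(h'-h1) \<le> L*(h2-h1)" using L0 2 by (intro mult_left_mono) auto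
      moreover have "\<psi> h1 \<le> HL \<psi> (t,h1)" using HL_ge_psi t h by auto
      ultimately show ?thesis using nn by linarith
    next
      case 3
      have "(h1-h')\<^sup>2 \<le> (h2-h')\<^sup>2" using 3 h by (intro power_mono) auto
      then have "(h1-h')\<^sup>2/(8*t) \<le> (h2-h')\<^sup>2/(8*t)" using t by (intro divide_right_mono) auto
      moreover have "\<psi> h' - (h1-h')\<^sup>2/(8*t) \<le> HL \<psi> (t,h1)" using h h' by (intro HL_ge[OF t]) auto
      ultimately show ?thesis using Lnn by linarith
    qed
  qed
qed

lemma HL_lip:
  assumes "t \<ge> 0" "h1 \<ge> 0" "h2 \<ge> 0"
  shows "\<bar>HL \<psi> (t,h1) - HL \<psi> (t,h2)\<bar> \<le> L*\<bar>h1 - h2\<bar>"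
proof (cases "t = 0")
  case True
  then show ?thesis using lip assms by (simp add: HL_zero)
next
  case False
  then have t: "t > 0" using assms by simp
  show ?thesis
  proof (cases "h1 \<le> h2")
    case True
    then show ?thesis using HL_lip_le[OF t assms(2) True] by (simp add: abs_le_iff abs_if)
  next
    case False
    then show ?thesis using HL_lip_le[OF t assms(3), of h1] by (simp add: abs_le_iff abs_if)
  qed
qed

lemma HL_mono_t:
  assumes "0 < t" "t \<le> t'" "h \<ge> 0"
  shows "HL \<psi> (t,h) \<le> HL \<psi> (t',h)"
proof (rule HL_le[OF assms(1)])
  fix h' :: real assume h': "h' \<ge> 0"
  have "(h-h')\<^sup>2/(8*t') \<le> (h-h')\<^sup>2/(8*t)" using assms by (intro divide_left_mono) auto
  moreover have "\<psi> h' - (h-h')\<^sup>2/(8*t') \<le> HL \<psi> (t',h)" using assms h' by (intro HL_ge) auto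
  ultimately show "\<psi> h' - (h-h')\<^sup>2/(8*t) \<le> HL \<psi> (t',h)" by linarith
qed

lemma HL_t_up:
  assumes "0 < t" "t \<le> t'" "h \<ge> 0"
  shows "HL \<psi> (t',h) \<le> HL \<psi> (t,h) + 8*L\<^sup>2*t'*(t'-t)/t"
proof (rule HL_le)
  show "t' > 0" using assms by simp
  fix h' :: real assume h': "h' \<ge> 0"
  define d where "d = \<bar>h - h'\<bar>"
  have d2: "(h-h')\<^sup>2 = d\<^sup>2" unfolding d_def by simp
  have extra: "8*L\<^sup>2*t'*(t'-t)/t \<ge> 0" using assms by simp
  have d0: "d \<ge> 0" unfolding d_def by simp
  show "\<psi> h' - (h-h')\<^sup>2/(8*t') \<le> HL \<psi> (t,h) + 8*L\<^sup>2*t'*(t'-t)/t"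
  proof (cases "d \<le> 8*t'*L")
    case True
    have eq: "(h-h')\<^sup>2/(8*t) - (h-h')\<^sup>2/(8*t') = d\<^sup>2*(t'-t)/(8*t*t')"
      using assms unfolding d2 by (simp add: field_simps)
    have "d\<^sup>2 \<le> (8*t'*L)\<^sup>2" using True unfolding d_def by (intro power_mono) auto
    then have "d\<^sup>2*(t'-t)/(8*t*t') \<le> (8*t'*L)\<^sup>2*(t'-t)/(8*t*t')"
      using assms by (intro divide_right_mono mult_right_mono) auto
    also have "\<dots> = 8*L\<^sup>2*t'*(t'-t)/t" using assms by (simp add: field_simps power2_eq_square)
    finally have "(h-h')\<^sup>2/(8*t) - (h-h')\<^sup>2/(8*t') \<le> 8*L\<^sup>2*t'*(t'-t)/t" using eq by simp
    moreover have "\<psi> h' - (h-h')\<^sup>2/(8*t) \<le> HL \<psi> (t,h)" using assms h' by (intro HL_ge) auto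
    ultimately show ?thesis by linarith
  next
    case False
    have "\<psi> h' \<le> \<psi> h + L*d" using lip[of h' h] assms h' unfolding d_def by (simp add: abs_minus_commute)
    moreover have "L*d \<le> d\<^sup>2/(8*t')"
    proof -
      have "L*(8*t') \<le> d" using False by (simp add: algebra_simps)
      then have "L*(8*t')*d \<le> d*d" using d0 by (intro mult_right_mono) auto
      then show ?thesis using assms by (simp add: field_simps power2_eq_square)
    qed
    moreover have "\<psi> h \<le> HL \<psi> (t,h)" using HL_ge_psi assms by auto
    ultimately show ?thesis using extra unfolding d2 by linarith
  qed
qed

lemma HL_tcont:
  assumes "t0 \<ge> 0" "t \<ge> 0" "t0 = 0 \<or> \<bar>t - t0\<bar> \<le> t0/2" "h \<ge> 0"
  shows "\<bar>HL \<psi> (t,h) - HL \<psi> (t0,h)\<bar> \<le> 24*L\<^sup>2*\<bar>t-t0\<bar>"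
proof (cases "t0 = 0")
  case True
  have "\<psi> h \<le> HL \<psi> (t,h)" "HL \<psi> (t,h) \<le> \<psi> h + 2*L\<^sup>2*t" using HL_ge_psi HL_le_psi assms by auto
  moreover have "2*L\<^sup>2*t \<le> 24*L\<^sup>2*t" using assms by simp
  ultimately show ?thesis using True assms by (simp add: HL_zero)
next
  case False
  then have t0p: "t0 > 0" and tt: "\<bar>t - t0\<bar> \<le> t0/2" using assms by auto
  have tl: "t0/2 \<le> t" "t \<le> 3*t0/2" using abs_le_D1[OF tt] abs_le_D2[OF tt] by (simp_all add: field_simps)
  show ?thesis
  proof (cases "t \<le> t0")
    case True
    have tp: "t > 0" using tl t0p by linarith
    have a: "HL \<psi> (t,h) \<le> HL \<psi> (t0,h)" using HL_mono_t[OF tp True assms(4)] .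
    have b: "HL \<psi> (t0,h) \<le> HL \<psi> (t,h) + 8*L\<^sup>2*t0*(t0-t)/t" using HL_t_up[OF tp True assms(4)] .
    have "8*L\<^sup>2*t0*(t0-t)/t \<le> 8*L\<^sup>2*t0*(t0-t)/(t0/2)"
      using tl t0p True by (intro divide_left_mono) auto
    also have "\<dots> = 16*L\<^sup>2*(t0-t)" using t0p by (simp add: field_simps)
    also have "\<dots> \<le> 24*L\<^sup>2*(t0-t)" using True by (intro mult_right_mono) auto
    finally show ?thesis using a b True by (simp add: abs_if)
  next
    case False
    then have T: "t0 \<le> t" by simp
    have a: "HL \<psi> (t0,h) \<le> HL \<psi> (t,h)" using HL_mono_t[OF t0p T assms(4)] .
    have b: "HL \<psi> (t,h) \<le> HL \<psi> (t0,h) + 8*L\<^sup>2*t*(t-t0)/t0" using HL_t_up[OF t0p T assms(4)] .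
    have "8*L\<^sup>2*t*(t-t0)/t0 \<le> 8*L\<^sup>2*(3*t0/2)*(t-t0)/t0"
      using tl t0p T by (intro divide_right_mono mult_right_mono mult_left_mono) auto
    also have "\<dots> = 12*L\<^sup>2*(t-t0)" using t0p by (simp add: field_simps)
    also have "\<dots> \<le> 24*L\<^sup>2*(t-t0)" using T by (intro mult_right_mono) auto
    finally show ?thesis using a b T by (simp add: abs_if)
  qed
qed

lemma HL_cont: "continuous_on ({0..} \<times> {0..}) (HL \<psi>)"
  unfolding continuous_on_iff
proof (intro ballI allI impI)
  fix p :: "real \<times> real" and e :: real
  assume p: "p \<in> {0..} \<times> {0..}" and e: "e > 0"
  obtain t0 h0 where pe: "p = (t0,h0)" by (cases p)
  have t0: "t0 \<ge> 0" "h0 \<ge> 0" using p pe by auto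
  define c where "c = L + 24*L\<^sup>2 + 1"
  have c: "c > 0" unfolding c_def using L0 by (simp add: add_nonneg_pos)
  define d where "d = (if t0 = 0 then e/(2*c) else min (t0/2) (e/(2*c)))"
  have dp: "d > 0" using e c t0 unfolding d_def by auto
  have dle: "d \<le> e/(2*c)" unfolding d_def by auto
  show "\<exists>d>0. \<forall>x'\<in>{0..} \<times> {0..}. dist x' p < d \<longrightarrow> dist (HL \<psi> x') (HL \<psi> p) < e"
  proof (intro exI[of _ d] conjI ballI impI dp)
    fix x' :: "real \<times> real" assume x': "x' \<in> {0..} \<times> {0..}" and dx: "dist x' p < d"
    obtain t h where xe: "x' = (t,h)" by (cases x')
    have th: "t \<ge> 0" "h \<ge> 0" using x' xe by auto
    have dt: "\<bar>t - t0\<bar> < d" using dist_fst_le[of x' p] dx unfolding xe pe by (simp add: dist_real_def)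
    have dh: "\<bar>h - h0\<bar> < d" using dist_snd_le[of x' p] dx unfolding xe pe by (simp add: dist_real_def)
    have cond: "t0 = 0 \<or> \<bar>t - t0\<bar> \<le> t0/2" using dt unfolding d_def by (auto split: if_splits)
    have "\<bar>HL \<psi> (t,h) - HL \<psi> (t0,h0)\<bar> \<le> \<bar>HL \<psi> (t,h) - HL \<psi> (t,h0)\<bar> + \<bar>HL \<psi> (t,h0) - HL \<psi> (t0,h0)\<bar>"
      by linarith
    also have "\<dots> \<le> L*\<bar>h - h0\<bar> + 24*L\<^sup>2*\<bar>t-t0\<bar>"
      using HL_lip[OF th(1) th(2) t0(2)] HL_tcont[OF t0(1) th(1) cond t0(2)] by linarith
    also have "\<dots> \<le> L*d + 24*L\<^sup>2*d" using dt dh L0 by (intro add_mono mult_left_mono) auto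
    also have "\<dots> < c*d" unfolding c_def using dp by (simp add: algebra_simps)
    also have "\<dots> \<le> c*(e/(2*c))" using dle c by (intro mult_left_mono) auto
    also have "\<dots> < e" using c e by simp
    finally show "dist (HL \<psi> x') (HL \<psi> p) < e" unfolding xe pe dist_real_def .
  qed
qed

lemma psi_cont: "continuous_on {0..} \<psi>"
  unfolding continuous_on_iff
proof (intro ballI allI impI)
  fix x e :: real assume x: "x \<in> {0..}" and e: "e > 0"
  show "\<exists>d>0. \<forall>x'\<in>{0..}. dist x' x < d \<longrightarrow> dist (\<psi> x') (\<psi> x) < e"
  proof (intro exI[of _ "e/(L+1)"] conjI ballI impI)
    show "e/(L+1) > 0" using e L0 by simp
    fix y assume y: "y \<in> {0..}" and d: "dist y x < e/(L+1)"
    have "\<bar>\<psi> y - \<psi> x\<bar> \<le> L*\<bar>y-x\<bar>" using lip x y by auto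
    also have "\<dots> \<le> (L+1)*\<bar>y - x\<bar>" by (simp add: algebra_simps)
    also have "\<dots> < (L+1)*(e/(L+1))" using d L0 by (intro mult_strict_left_mono) (auto simp: dist_real_def)
    also have "\<dots> = e" using L0 by simp
    finally show "dist (\<psi> y) (\<psi> x) < e" by (simp add: dist_real_def)
  qed
qed

lemma HL_max:
  assumes t: "t > 0" and h: "h \<ge> 0"
  shows "\<exists>hs\<ge>0. HL \<psi> (t,h) = \<psi> hs - (h-hs)\<^sup>2/(8*t)"
proof -
  define f where "f = (\<lambda>h'. \<psi> h' - (h-h')\<^sup>2/(8*t))"
  define S where "S = {0..h + 8*t*L}"
  have cS: "compact S" "S \<noteq> {}" unfolding S_def using h t L0 by auto
  have cf: "continuous_on S f" unfolding f_def using t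
    by (intro continuous_intros continuous_on_subset[OF psi_cont]) (auto simp: S_def)
  obtain hs where hs: "hs \<in> S" "\<And>y. y \<in> S \<Longrightarrow> f y \<le> f hs"
    using continuous_attains_sup[OF cS cf] by blast
  have hS: "h \<in> S" unfolding S_def using h t L0 by auto
  have all: "f y \<le> f hs" if y: "y \<ge> 0" for y
  proof (cases "y \<in> S")
    case True then show ?thesis by (rule hs(2))
  next
    case False
    then have yb: "y > h + 8*t*L" using y unfolding S_def by auto
    have yh: "y \<ge> h" using yb t L0 by (smt (verit) mult_nonneg_nonneg)
    have "\<psi> y \<le> \<psi> h + L*(y-h)" using abs_le_D1[OF lip[of y h]] y h yh by auto
    moreover have "L*(y-h) < (y-h)\<^sup>2/(8*t)"
    proof -
      have "L*(8*t) < y - h" using yb by (simp add: algebra_simps)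
      moreover have "0 \<le> L*(8*t)" using L0 t by simp
      ultimately have "L*(8*t)*(y-h) < (y-h)*(y-h)" by (intro mult_strict_right_mono) auto
      then show ?thesis using t by (simp add: field_simps power2_eq_square)
    qed
    moreover have "(h-y)\<^sup>2 = (y-h)\<^sup>2" by (simp add: power2_commute)
    moreover have "f h \<le> f hs" using hs(2)[OF hS] .
    moreover have "f h = \<psi> h" unfolding f_def by simp
    ultimately show ?thesis unfolding f_def by simp
  qed
  have "HL \<psi> (t,h) \<le> f hs" using all unfolding f_def by (intro HL_le[OF t]) auto
  moreover have "f hs \<le> HL \<psi> (t,h)" unfolding f_def using hs(1) h unfolding S_def by (intro HL_ge[OF t]) auto
  ultimately show ?thesis using hs(1) unfolding S_def f_def by (intro exI[of _ hs]) auto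
qed

lemma titu:
  fixes a b s r :: real
  assumes "s > 0" "r > 0"
  shows "(a+b)\<^sup>2/(s+r) \<le> a\<^sup>2/s + b\<^sup>2/r"
proof -
  have "0 \<le> (a*r - b* s)\<^sup>2" by simp
  then have "(a+b)\<^sup>2*(s*r) \<le> (a\<^sup>2*r + b\<^sup>2* s)*(s+r)" by (simp add: power2_eq_square algebra_simps)
  then show ?thesis using assms by (simp add: field_simps)
qed

lemma HL_semigroup:
  assumes "0 < s" "s < t" "h \<ge> 0" "k \<ge> 0"
  shows "HL \<psi> (s,k) \<le> HL \<psi> (t,h) + (h-k)\<^sup>2/(8*(t-s))"
proof (rule HL_le[OF assms(1)])
  fix h' :: real assume h': "h' \<ge> 0"
  have "((k-h')+(h-k))\<^sup>2/(s+(t-s)) \<le> (k-h')\<^sup>2/s + (h-k)\<^sup>2/(t-s)" using assms by (intro titu) auto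
  then have F: "(h-h')\<^sup>2/t \<le> (k-h')\<^sup>2/s + (h-k)\<^sup>2/(t-s)" by simp
  have "((h-h')\<^sup>2/t)/8 \<le> ((k-h')\<^sup>2/s + (h-k)\<^sup>2/(t-s))/8" using F by (rule divide_right_mono) simp
  then have "(h-h')\<^sup>2/(8*t) \<le> (k-h')\<^sup>2/(8* s) + (h-k)\<^sup>2/(8*(t-s))"
    by (simp add: add_divide_distrib mult.commute)
  moreover have "\<psi> h' - (h-h')\<^sup>2/(8*t) \<le> HL \<psi> (t,h)" using assms h' by (intro HL_ge) auto
  ultimately show "\<psi> h' - (k-h')\<^sup>2/(8* s) \<le> HL \<psi> (t,h) + (h-k)\<^sup>2/(8*(t-s))" by linarith
qed

end

lemma dist_pair_le: "dist (a::real, b::real) (c, d) \<le> \<bar>a - c\<bar> + \<bar>b - d\<bar>"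
  unfolding dist_Pair_Pair dist_real_def using sqrt_sum_squares_le_sum_abs by simp

lemma DERIV_right_max:
  fixes f :: "real \<Rightarrow> real"
  assumes "DERIV f x :> l" "d > 0" "\<And>y. x \<le> y \<Longrightarrow> y < x + d \<Longrightarrow> f y \<le> f x"
  shows "l \<le> 0"
proof (rule ccontr)
  assume "\<not> l \<le> 0"
  then obtain d' where d': "d' > 0" "\<And>h. h > 0 \<Longrightarrow> h < d' \<Longrightarrow> f x < f (x + h)"
    using DERIV_pos_inc_right[OF assms(1)] by force
  define h where "h = min d d' / 2"
  have "h > 0" "h < d'" "h < d" using d' assms(2) by (auto simp: h_def)
  then have "f x < f (x + h)" "f (x+h) \<le> f x" using d'(2) assms(3)[of "x+h"] by auto
  then show False by simp
qed

lemma mvt_any: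
  fixes f f' :: "real \<Rightarrow> real"
  assumes "\<And>x. DERIV f x :> f' x"
  shows "\<exists>z. \<bar>z - a\<bar> \<le> \<bar>b - a\<bar> \<and> f b - f a = (b - a) * f' z"
proof -
  consider "a < b" | "b < a" | "a = b" by linarith
  then show ?thesis
  proof cases
    case 1
    then obtain z where "z > a" "z < b" "f b - f a = (b - a) * f' z" using MVT2[OF 1 assms] by blast
    then show ?thesis by (intro exI[of _ z]) auto
  next
    case 2
    then obtain z where "z > b" "z < a" "f a - f b = (a - b) * f' z" using MVT2[OF 2 assms] by blast
    then show ?thesis by (intro exI[of _ z]) (auto simp: algebra_simps)
  qed auto
qed

lemma diag_limit:
  assumes sm: "smooth2 \<phi>"
  shows "((\<lambda>\<epsilon>. (\<phi> (t-\<epsilon>, h-\<epsilon>* v) - \<phi> (t,h))/\<epsilon>) \<longlongrightarrow> -(pdt \<phi> (t,h)) - v * pdh \<phi> (t,h)) (at_right 0)"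
proof -
  define P where "P = pdh \<phi> (t,h)"
  define Q where "Q = pdt \<phi> (t,h)"
  define f1 where "f1 = (\<lambda>\<epsilon>. (\<phi> (t-\<epsilon>, h-\<epsilon>* v) - \<phi> (t-\<epsilon>,h))/\<epsilon>)"
  define f2 where "f2 = (\<lambda>\<epsilon>::real. (\<phi> (t-\<epsilon>, h) - \<phi> (t,h))/\<epsilon>)"
  have sum: "(\<lambda>\<epsilon>. (\<phi> (t-\<epsilon>, h-\<epsilon>* v) - \<phi> (t,h))/\<epsilon>) = (\<lambda>\<epsilon>. f1 \<epsilon> + f2 \<epsilon>)"
    unfolding f1_def f2_def by (rule ext) (simp add: diff_divide_distrib)
  have l2: "(f2 \<longlongrightarrow> -Q) (at_right 0)"
  proof -
    have d1: "((\<lambda>x. t - x) has_real_derivative -1) (at 0)" by (auto intro!: derivative_eq_intros)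
    have d0: "((\<lambda>s. \<phi> (s,h)) has_real_derivative Q) (at ((\<lambda>x. t - x) 0))"
      using smooth2_deriv_t[OF sm, of h t] unfolding Q_def by simp
    have "DERIV (\<lambda>x. \<phi> (t - x, h)) 0 :> Q * (-1)"
      using DERIV_chain2[OF d0 d1] by simp
    then have "((\<lambda>y. (\<phi> (t - y, h) - \<phi> (t - 0, h)) / (y - 0)) \<longlongrightarrow> -Q) (at 0)"
      unfolding has_field_derivative_iff by simp
    then have "(f2 \<longlongrightarrow> -Q) (at 0)" unfolding f2_def by simp
    then show ?thesis by (rule tendsto_mono[OF at_le, rotated]) simp
  qed
  have l1: "(f1 \<longlongrightarrow> -v * P) (at_right 0)"
    unfolding tendsto_iff
  proof (intro allI impI)
    fix e :: real assume e: "e > 0"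
    have cpdh: "continuous_on UNIV (pdh \<phi>)" by (rule smooth2_cont_pdh[OF sm])
    have e': "e/(\<bar>v\<bar>+1) > 0" using e by simp
    obtain d where d: "d > 0" "\<And>y. dist y (t,h) < d \<Longrightarrow> dist (pdh \<phi> y) (pdh \<phi> (t,h)) < e/(\<bar>v\<bar>+1)"
      using cpdh e' unfolding continuous_on_iff by (metis UNIV_I)
    show "\<forall>\<^sub>F \<epsilon> in at_right 0. dist (f1 \<epsilon>) (-v * P) < e"
      unfolding eventually_at_right_field
    proof (intro exI[of _ "d/(\<bar>v\<bar>+1)"] conjI allI impI)
      show "(0::real) < d/(\<bar>v\<bar>+1)" using d by simp
      fix \<epsilon> :: real assume ep0: "0 < \<epsilon>" and ep1: "\<epsilon> < d/(\<bar>v\<bar>+1)"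
      have ep: "0 < \<epsilon> \<and> \<epsilon> < d/(\<bar>v\<bar>+1)" using ep0 ep1 by simp
      have der: "\<And>x. DERIV (\<lambda>k. \<phi> (t-\<epsilon>, k)) x :> pdh \<phi> (t-\<epsilon>, x)"
        using smooth2_deriv_h[OF sm] by blast
      obtain z where z: "\<bar>z - h\<bar> \<le> \<bar>(h-\<epsilon>* v) - h\<bar>"
        "\<phi> (t-\<epsilon>, h-\<epsilon>* v) - \<phi> (t-\<epsilon>, h) = ((h-\<epsilon>* v) - h) * pdh \<phi> (t-\<epsilon>, z)"
        using mvt_any[OF der, of h "h-\<epsilon>* v"] by blast
      have f1e: "f1 \<epsilon> = -v * pdh \<phi> (t-\<epsilon>, z)" unfolding f1_def z(2) using ep by simp
      have zb: "\<bar>z - h\<bar> \<le> \<epsilon>*\<bar>v\<bar>" using z(1) ep by (simp add: abs_mult)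
      have "dist (t-\<epsilon>, z) (t,h) \<le> \<bar>(t-\<epsilon>) - t\<bar> + \<bar>z - h\<bar>" by (rule dist_pair_le)
      also have "\<dots> \<le> \<epsilon>*(\<bar>v\<bar>+1)" using zb ep by (simp add: algebra_simps)
      also have "\<dots> < d" using ep by (simp add: field_simps)
      finally have "dist (pdh \<phi> (t-\<epsilon>, z)) P < e/(\<bar>v\<bar>+1)" using d(2) unfolding P_def by blast
      then have "\<bar>v\<bar> * \<bar>pdh \<phi> (t-\<epsilon>, z) - P\<bar> \<le> \<bar>v\<bar> * (e/(\<bar>v\<bar>+1))"
        by (intro mult_left_mono) (auto simp: dist_real_def)
      also have "\<dots> < e" using e by (simp add: field_simps)
      finally show "dist (f1 \<epsilon>) (-v * P) < e"
        unfolding f1e dist_real_def by (simp add: abs_mult[symmetric] algebra_simps)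
    qed
  qed
  have "((\<lambda>\<epsilon>. f1 \<epsilon> + f2 \<epsilon>) \<longlongrightarrow> -v * P + -Q) (at_right 0)" by (intro tendsto_add l1 l2)
  then show ?thesis unfolding sum P_def Q_def by (simp add: algebra_simps)
qed

context lipfun begin

lemma HL_sub: "viscosity_subsolution (HL \<psi>)"
  unfolding viscosity_subsolution_def
proof (intro conjI HL_cont allI impI)
  fix t h :: real and \<phi>
  assume A: "0 < t \<and> 0 \<le> h \<and> smooth2 \<phi> \<and> local_max_at (\<lambda>y. HL \<psi> y - \<phi> y) (t, h)"
  then have t: "t > 0" and h: "h \<ge> 0" and sm: "smooth2 \<phi>" by auto
  obtain e where e: "e > 0" and lm: "\<And>y. y \<in> {0<..} \<times> {0..} \<Longrightarrow> dist y (t,h) < e \<Longrightarrow> HL \<psi> y - \<phi> y \<le> HL \<psi> (t,h) - \<phi> (t,h)"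
    using A unfolding local_max_at_def by blast
  obtain hs where hs: "hs \<ge> 0" "HL \<psi> (t,h) = \<psi> hs - (h-hs)\<^sup>2/(8*t)" using HL_max[OF t h] by blast
  define r where "r = (\<lambda>s. \<psi> hs - (h-hs)\<^sup>2/(8* s) - \<phi> (s,h))"
  have dr: "DERIV r t :> (h-hs)\<^sup>2/(8*t\<^sup>2) - pdt \<phi> (t,h)"
    unfolding r_def using t smooth2_deriv_t[OF sm, of h t]
    by (auto intro!: derivative_eq_intros simp: power2_eq_square field_simps)
  have "(h-hs)\<^sup>2/(8*t\<^sup>2) - pdt \<phi> (t,h) = 0"
  proof (rule DERIV_local_max[OF dr])
    show "0 < min e t" using e t by simp
    show "\<forall>y. \<bar>t - y\<bar> < min e t \<longrightarrow> r y \<le> r t"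
    proof (intro allI impI)
      fix y assume y: "\<bar>t - y\<bar> < min e t"
      then have yp: "y > 0" by auto
      have "HL \<psi> (y,h) - \<phi> (y,h) \<le> HL \<psi> (t,h) - \<phi> (t,h)"
        using lm[of "(y,h)"] yp h y by (auto simp: dist_t abs_minus_commute)
      moreover have "\<psi> hs - (h-hs)\<^sup>2/(8*y) \<le> HL \<psi> (y,h)" using HL_ge[OF yp h hs(1)] .
      ultimately show "r y \<le> r t" unfolding r_def using hs(2) by linarith
    qed
  qed
  then have pt: "pdt \<phi> (t,h) = (h-hs)\<^sup>2/(8*t\<^sup>2)" by simp
  define r2 where "r2 = (\<lambda>k. \<psi> hs - (k-hs)\<^sup>2/(8*t) - \<phi> (t,k))"
  have dr2: "DERIV r2 h :> -((h-hs)/(4*t)) - pdh \<phi> (t,h)"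
    unfolding r2_def using t smooth2_deriv_h[OF sm, of t h]
    by (auto intro!: derivative_eq_intros simp: power2_eq_square field_simps)
  have r2le: "r2 k \<le> r2 h" if "k \<ge> 0" "\<bar>k - h\<bar> < e" for k
  proof -
    have "HL \<psi> (t,k) - \<phi> (t,k) \<le> HL \<psi> (t,h) - \<phi> (t,h)"
      using lm[of "(t,k)"] t that by (auto simp: dist_h)
    moreover have "\<psi> hs - (k-hs)\<^sup>2/(8*t) \<le> HL \<psi> (t,k)" using HL_ge[OF t that(1) hs(1)] .
    ultimately show "r2 k \<le> r2 h" unfolding r2_def using hs(2) by linarith
  qed
  show "if h > 0 then pdt \<phi> (t, h) - 2 * (pdh \<phi> (t, h))\<^sup>2 \<le> 0
         else min (- pdh \<phi> (t, h)) (pdt \<phi> (t, h) - 2 * (pdh \<phi> (t, h))\<^sup>2) \<le> 0"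
  proof (cases "h > 0")
    case True
    have "-((h-hs)/(4*t)) - pdh \<phi> (t,h) = 0"
    proof (rule DERIV_local_max[OF dr2])
      show "0 < min e h" using e True by simp
      show "\<forall>y. \<bar>h - y\<bar> < min e h \<longrightarrow> r2 y \<le> r2 h"
        using r2le by (auto simp: abs_minus_commute)
    qed
    then have "pdh \<phi> (t,h) = -((h-hs)/(4*t))" by simp
    moreover have "2*(-((h-hs)/(4*t)))\<^sup>2 = (h-hs)\<^sup>2/(8*t\<^sup>2)"
      using t by (simp add: power_divide power_mult_distrib)
    ultimately have "pdt \<phi> (t, h) - 2 * (pdh \<phi> (t, h))\<^sup>2 = 0"
      unfolding pt by simp
    then show ?thesis using True by simp
  next
    case False
    then have h0: "h = 0" using h by simp
    have "-((h-hs)/(4*t)) - pdh \<phi> (t,h) \<le> 0"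
      by (rule DERIV_right_max[OF dr2 e]) (use r2le h in auto)
    moreover have "hs/(4*t) \<ge> 0" using hs t by simp
    ultimately have "- pdh \<phi> (t,h) \<le> 0" using h0 by simp
    then show ?thesis using False by simp
  qed
qed

lemma HL_super: "viscosity_supersolution (HL \<psi>)"
  unfolding viscosity_supersolution_def
proof (intro conjI HL_cont allI impI)
  fix t h :: real and \<phi>
  assume A: "0 < t \<and> 0 \<le> h \<and> smooth2 \<phi> \<and> local_min_at (\<lambda>y. HL \<psi> y - \<phi> y) (t, h)"
  then have t: "t > 0" and h: "h \<ge> 0" and sm: "smooth2 \<phi>" by auto
  obtain e where e: "e > 0" and lm: "\<And>y. y \<in> {0<..} \<times> {0..} \<Longrightarrow> dist y (t,h) < e \<Longrightarrow> HL \<psi> y - \<phi> y \<ge> HL \<psi> (t,h) - \<phi> (t,h)"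
    using A unfolding local_min_at_def by blast
  define P where "P = pdh \<phi> (t,h)"
  define Q where "Q = pdt \<phi> (t,h)"
  have key: "Q - 2*P\<^sup>2 \<ge> 0" if hP: "h > 0 \<or> P \<ge> 0"
  proof -
    define v where "v = -4*P"
    define b where "b = min (t/2) (min (e/(2*(1+\<bar>v\<bar>))) (if v > 0 then h/v else 1))"
    have bp: "b > 0" unfolding b_def using t e hP by (auto simp: v_def divide_pos_neg)
    have lim: "((\<lambda>\<epsilon>. (\<phi> (t-\<epsilon>, h-\<epsilon>* v) - \<phi> (t,h))/\<epsilon>) \<longlongrightarrow> -Q - v * P) (at_right 0)"
      unfolding P_def Q_def by (rule diag_limit[OF sm])
    have ev: "\<forall>\<^sub>F \<epsilon> in at_right 0. (\<phi> (t-\<epsilon>, h-\<epsilon>* v) - \<phi> (t,h))/\<epsilon> \<le> v\<^sup>2/8"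
      unfolding eventually_at_right_field
    proof (intro exI[of _ b] conjI allI impI bp)
      fix \<epsilon> :: real assume ep0: "0 < \<epsilon>" and ep1: "\<epsilon> < b"
      have ep: "0 < \<epsilon> \<and> \<epsilon> < b" using ep0 ep1 by simp
      have s: "t - \<epsilon> > 0" "t - \<epsilon> < t" using ep unfolding b_def by auto
      have k: "h - \<epsilon>* v \<ge> 0"
      proof (cases "v > 0")
        case True
        then have "\<epsilon> < h/v" using ep unfolding b_def by auto
        then have "\<epsilon>* v < h" using True by (simp add: field_simps)
        then show ?thesis by simp
      next
        case False
        then have "\<epsilon> * v \<le> 0" using ep by (intro mult_nonneg_nonpos) auto
        then show ?thesis using h by simp
      qed
      have "dist (t-\<epsilon>, h-\<epsilon>* v) (t,h) \<le> \<bar>(t-\<epsilon>) - t\<bar> + \<bar>(h-\<epsilon>* v) - h\<bar>" by (rule dist_pair_le)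
      also have "\<dots> = \<epsilon>*(1+\<bar>v\<bar>)" using ep by (simp add: abs_mult algebra_simps)
      also have "\<dots> < e"
      proof -
        have "\<epsilon> < e/(2*(1+\<bar>v\<bar>))" using ep unfolding b_def by auto
        then have "\<epsilon>*(1+\<bar>v\<bar>) < e/2" by (simp add: field_simps)
        then show ?thesis using e by simp
      qed
      finally have dd: "dist (t-\<epsilon>, h-\<epsilon>* v) (t,h) < e" .
      have "HL \<psi> (t-\<epsilon>, h-\<epsilon>* v) - \<phi> (t-\<epsilon>, h-\<epsilon>* v) \<ge> HL \<psi> (t,h) - \<phi> (t,h)"
        using lm[OF _ dd] s k by auto
      moreover have "HL \<psi> (t-\<epsilon>, h-\<epsilon>* v) \<le> HL \<psi> (t,h) + (h - (h-\<epsilon>* v))\<^sup>2/(8*(t-(t-\<epsilon>)))"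
        by (rule HL_semigroup) (use s k h in auto)
      moreover have "(h - (h-\<epsilon>* v))\<^sup>2/(8*(t-(t-\<epsilon>))) = \<epsilon>*(v\<^sup>2/8)"
        using ep by (simp add: power2_eq_square field_simps)
      ultimately have "\<phi> (t-\<epsilon>, h-\<epsilon>* v) - \<phi> (t,h) \<le> \<epsilon>*(v\<^sup>2/8)" by linarith
      then show "(\<phi> (t-\<epsilon>, h-\<epsilon>* v) - \<phi> (t,h))/\<epsilon> \<le> v\<^sup>2/8" using ep by (simp add: field_simps)
    qed
    have "-Q - v * P \<le> v\<^sup>2/8" by (rule tendsto_upperbound[OF lim ev]) simp
    then show ?thesis unfolding v_def by (simp add: power2_eq_square algebra_simps)
  qed
  show "if h > 0 then pdt \<phi> (t, h) - 2 * (pdh \<phi> (t, h))\<^sup>2 \<ge> 0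
         else max (- pdh \<phi> (t, h)) (pdt \<phi> (t, h) - 2 * (pdh \<phi> (t, h))\<^sup>2) \<ge> 0"
  proof (cases "h > 0")
    case True
    then show ?thesis using key unfolding P_def Q_def by simp
  next
    case False
    show ?thesis
    proof (cases "P \<ge> 0")
      case True
      then show ?thesis using key False unfolding P_def Q_def by simp
    next
      case False
      then show ?thesis using \<open>\<not> h > 0\<close> unfolding P_def by simp
    qed
  qed
qed

end

abbreviation "NG \<equiv> std_gaussian"

lemma NG_prob: "prob_space NG"
  unfolding std_gaussian_def by (rule prob_space_normal_density) simp

lemma sets_NG[simp, measurable_cong]: "sets NG = sets borel"
  unfolding std_gaussian_def by simp

lemma space_NG[simp]: "space NG = UNIV"
  unfolding std_gaussian_def by simp

lemma NG_integrable_iff: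
  assumes "f \<in> borel_measurable borel"
  shows "integrable NG f \<longleftrightarrow> integrable lborel (\<lambda>x. std_normal_density x * f x)"
  unfolding std_gaussian_def by (subst integrable_density) (use assms in auto)

lemma NG_integral:
  assumes "f \<in> borel_measurable borel"
  shows "integral\<^sup>L NG f = (\<integral>x. std_normal_density x * f x \<partial>lborel)"
  unfolding std_gaussian_def by (subst integral_density) (use assms in auto)

lemma NG_abs: "integrable NG (\<lambda>z. \<bar>z\<bar>)"
  using integrable_std_normal_moment_abs[of 1] by (subst NG_integrable_iff) auto

lemma NG_z: "integrable NG (\<lambda>z. z)"
  using integrable_std_normal_moment[of 1] by (subst NG_integrable_iff) auto

lemma NG_z2: "integrable NG (\<lambda>z. z\<^sup>2)"
  using integrable_std_normal_moment[of 2] by (subst NG_integrable_iff) auto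

lemma NG_int_z: "(\<integral>z. z \<partial>NG) = 0"
  using integral_std_normal_moment_odd[of 0] by (subst NG_integral) auto

lemma NG_int_z2: "(\<integral>z. z\<^sup>2 \<partial>NG) = 1"
  using integral_std_normal_moment_even[of 1] by (subst NG_integral) auto

lemma NG_int_abs: "(\<integral>z. \<bar>z\<bar> \<partial>NG) = sqrt (2/pi)"
  using integral_std_normal_moment_abs_odd[of 0] by (subst NG_integral) auto

lemma distr_pair_snd_NG: "distr (NG \<Otimes>\<^sub>M NG) NG snd = NG"
proof -
  interpret prob_space NG by (rule NG_prob)
  show ?thesis
  proof (intro measure_eqI)
    fix A assume A: "A \<in> sets (distr (NG \<Otimes>\<^sub>M NG) NG snd)"
    from A have "emeasure (distr (NG \<Otimes>\<^sub>M NG) NG snd) A = emeasure (NG \<Otimes>\<^sub>M NG) (space NG \<times> A)"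
      by (auto simp add: emeasure_distr space_pair_measure dest: sets.sets_into_space intro!: arg_cong2[where f=emeasure])
    with A show "emeasure (distr (NG \<Otimes>\<^sub>M NG) NG snd) A = emeasure NG A"
      using emeasure_space_1 by (simp add: emeasure_pair_measure_Times)
  qed simp
qed

lemma distr_pair_fst_NG: "distr (NG \<Otimes>\<^sub>M NG) NG fst = NG"
proof -
  interpret prob_space NG by (rule NG_prob)
  show ?thesis by (rule distr_pair_fst)
qed

lemma gauss_distr:
  fixes a b :: real
  assumes ab: "a \<ge> 0" "b \<ge> 0" "a\<^sup>2 + b\<^sup>2 = 1"
  shows "distr (NG \<Otimes>\<^sub>M NG) NG (\<lambda>w. a * fst w + b * snd w) = NG"
proof -
  interpret NGp: prob_space NG by (rule NG_prob)
  interpret N2: pair_prob_space NG NG ..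
  consider "a = 0" | "b = 0" | "a > 0 \<and> b > 0" using ab by force
  then show ?thesis
  proof cases
    case 1
    then have "b = 1" using ab by (simp add: power2_eq_1_iff)
    then show ?thesis using 1 distr_pair_snd_NG by simp
  next
    case 2
    then have "a = 1" using ab by (simp add: power2_eq_1_iff)
    then show ?thesis using 2 distr_pair_fst_NG by simp
  next
    case 3
    let ?M = "NG \<Otimes>\<^sub>M NG"
    have dl: "distr ?M lborel g = distr ?M NG g" for g
      by (rule distr_cong) auto
    have ind0: "prob_space.indep_var ?M NG fst NG snd"
      unfolding N2.P.indep_var_distribution_eq
    proof (intro conjI)
      show "fst \<in> measurable ?M NG" by measurable
      show "snd \<in> measurable ?M NG" by measurable
      have e: "(\<lambda>x::real\<times>real. (fst x, snd x)) = (\<lambda>x. x)" by simp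
      show "distr ?M NG fst \<Otimes>\<^sub>M distr ?M NG snd = distr ?M ?M (\<lambda>x. (fst x, snd x))"
        unfolding e by (simp only: distr_pair_fst_NG distr_pair_snd_NG distr_id)
    qed
    have ind: "prob_space.indep_var ?M borel ((\<lambda>z. a*z) \<circ> fst) borel ((\<lambda>z. b*z) \<circ> snd)"
      by (rule N2.P.indep_var_compose[OF ind0]) auto
    have dfst: "distributed ?M lborel fst std_normal_density"
      unfolding distributed_def dl distr_pair_fst_NG by (auto simp: std_gaussian_def)
    have dsnd: "distributed ?M lborel snd std_normal_density"
      unfolding distributed_def dl distr_pair_snd_NG by (auto simp: std_gaussian_def)
    have dX: "distributed ?M lborel (\<lambda>x. a * fst x) (normal_density 0 a)"
      using N2.P.normal_density_affine[OF dfst, where \<alpha>=a and \<beta>=0] 3 by simp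
    have dY: "distributed ?M lborel (\<lambda>x. b * snd x) (normal_density 0 b)"
      using N2.P.normal_density_affine[OF dsnd, where \<alpha>=b and \<beta>=0] 3 by simp
    have "distributed ?M lborel (\<lambda>x. a * fst x + b * snd x) (normal_density (0+0) (sqrt (a\<^sup>2 + b\<^sup>2)))"
      by (rule N2.P.add_indep_normal) (use ind 3 dX dY in \<open>auto simp: o_def\<close>)
    then have "distr ?M lborel (\<lambda>x. a * fst x + b * snd x) = NG"
      using ab unfolding distributed_def std_gaussian_def by simp
    then show ?thesis using dl by simp
  qed
qed

lemma gauss_decomp:
  fixes f :: "real \<Rightarrow> real" and a b :: real
  assumes f: "f \<in> borel_measurable borel" and fi: "integrable NG f"
    and ab: "a \<ge> 0" "b \<ge> 0" "a\<^sup>2 + b\<^sup>2 = 1"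
  shows "integrable (NG \<Otimes>\<^sub>M NG) (\<lambda>w. f (a * fst w + b * snd w))"
    and "integral\<^sup>L NG f = (\<integral>z1. (\<integral>z2. f (a*z1 + b*z2) \<partial>NG) \<partial>NG)"
proof -
  interpret NGp: prob_space NG by (rule NG_prob)
  interpret N2: pair_prob_space NG NG ..
  have g: "(\<lambda>w. a * fst w + b * snd w) \<in> measurable (NG \<Otimes>\<^sub>M NG) NG" by measurable
  have fN: "f \<in> borel_measurable NG" using f by simp
  have D: "distr (NG \<Otimes>\<^sub>M NG) NG (\<lambda>w. a * fst w + b * snd w) = NG" by (rule gauss_distr[OF ab])
  show I: "integrable (NG \<Otimes>\<^sub>M NG) (\<lambda>w. f (a * fst w + b * snd w))"
    using integrable_distr_eq[OF g fN] fi D by simp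
  have "integral\<^sup>L NG f = (\<integral>w. f (a * fst w + b * snd w) \<partial>(NG \<Otimes>\<^sub>M NG))"
    using integral_distr[OF g fN] D by simp
  also have "\<dots> = (\<integral>z1. (\<integral>z2. f (a*z1 + b*z2) \<partial>NG) \<partial>NG)"
    using N2.integral_fst[of "\<lambda>z1 z2. f (a*z1 + b*z2)"] I by (simp add: split_beta')
  finally show "integral\<^sup>L NG f = (\<integral>z1. (\<integral>z2. f (a*z1 + b*z2) \<partial>NG) \<partial>NG)" .
qed

lemma distr_pair_snd_gen:
  assumes "prob_space M1" "sigma_finite_measure M2"
  shows "distr (M1 \<Otimes>\<^sub>M M2) M2 snd = M2"
proof -
  interpret M1: prob_space M1 by fact
  interpret M2: sigma_finite_measure M2 by fact
  show ?thesis
  proof (intro measure_eqI)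
    fix A assume A: "A \<in> sets (distr (M1 \<Otimes>\<^sub>M M2) M2 snd)"
    from A have "emeasure (distr (M1 \<Otimes>\<^sub>M M2) M2 snd) A = emeasure (M1 \<Otimes>\<^sub>M M2) (space M1 \<times> A)"
      by (auto simp add: emeasure_distr space_pair_measure dest: sets.sets_into_space intro!: arg_cong2[where f=emeasure])
    with A show "emeasure (distr (M1 \<Otimes>\<^sub>M M2) M2 snd) A = emeasure M2 A"
      using M1.emeasure_space_1 by (simp add: M2.emeasure_pair_measure_Times)
  qed simp
qed

locale psi_setup =
  fixes P :: "real measure" and K :: real
  assumes prob: "prob_space P" and sets_P[measurable_cong]: "sets P = sets borel"
    and K0: "K \<ge> 0" and AEK: "AE x in P. \<bar>x\<bar> \<le> K"
begin

sublocale PP: prob_space P by (rule prob)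

lemma space_P[simp]: "space P = UNIV" using sets_eq_imp_space_eq[OF sets_P] by simp

definition cl :: "real \<Rightarrow> real" where "cl x = max (-K) (min K x)"

lemma cl_meas[measurable]: "cl \<in> borel_measurable borel"
  unfolding cl_def by measurable

lemma cl_bound: "\<bar>cl x\<bar> \<le> K" using K0 unfolding cl_def by auto

lemma cl_AE: "AE x in P. cl x = x"
  using AEK by eventually_elim (auto simp: cl_def)

definition Expo :: "real \<Rightarrow> real \<Rightarrow> real \<Rightarrow> real \<Rightarrow> real" where
  "Expo h xb z x = sqrt h * z * cl x + h * cl x * xb - h / 2 * (cl x)\<^sup>2"

definition Zc :: "real \<Rightarrow> real \<Rightarrow> real \<Rightarrow> real" where
  "Zc h xb z = (\<integral>x. exp (Expo h xb z x) \<partial>P)"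

definition Bd :: "real \<Rightarrow> real \<Rightarrow> real \<Rightarrow> real" where
  "Bd h xb z = sqrt h * \<bar>z\<bar> * K + h * K * \<bar>xb\<bar> + h * K\<^sup>2 / 2"

lemma Expo_meas[measurable]: "(\<lambda>x. Expo h xb z x) \<in> borel_measurable borel"
  unfolding Expo_def by measurable

lemma Expo_bound:
  assumes h: "h \<ge> 0"
  shows "\<bar>Expo h xb z x\<bar> \<le> Bd h xb z"
proof -
  have c: "\<bar>cl x\<bar> \<le> K" by (rule cl_bound)
  have a1: "\<bar>sqrt h * z * cl x\<bar> \<le> sqrt h * \<bar>z\<bar> * K"
    using c h by (simp add: abs_mult mult_left_mono)
  have a2: "\<bar>h * cl x * xb\<bar> \<le> h * K * \<bar>xb\<bar>"
    using c h by (simp add: abs_mult mult_left_mono mult_right_mono)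
  have "(cl x)\<^sup>2 \<le> K\<^sup>2" using c by (metis abs_le_square_iff abs_of_nonneg K0)
  then have a3: "\<bar>h / 2 * (cl x)\<^sup>2\<bar> \<le> h * K\<^sup>2 / 2"
    using h by (simp add: abs_mult mult_left_mono)
  show ?thesis unfolding Expo_def Bd_def using a1 a2 a3 by linarith
qed

lemma Bd_nonneg: "h \<ge> 0 \<Longrightarrow> Bd h xb z \<ge> 0"
  unfolding Bd_def using K0 by simp

lemma exp_Expo_int: "h \<ge> 0 \<Longrightarrow> integrable P (\<lambda>x. exp (Expo h xb z x))"
proof (rule PP.integrable_const_bound[where B="exp (Bd h xb z)"])
  assume h: "h \<ge> 0"
  have "\<And>x. norm (exp (Expo h xb z x)) \<le> exp (Bd h xb z)" using abs_le_D1[OF Expo_bound[OF h]] by simp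
  then show "AE x in P. norm (exp (Expo h xb z x)) \<le> exp (Bd h xb z)" by simp
qed simp

lemma measP[simp]: "measure P UNIV = 1"
  using PP.prob_space by simp

lemma int_const[simp]: "(\<integral>x. c \<partial>P) = (c::real)"
  by simp

lemma Zc_bounds:
  assumes h: "h \<ge> 0"
  shows "exp (- Bd h xb z) \<le> Zc h xb z" "Zc h xb z \<le> exp (Bd h xb z)"
proof -
  have "(\<integral>x. exp (- Bd h xb z) \<partial>P) \<le> Zc h xb z"
  proof -
    have lb: "- Bd h xb z \<le> Expo h xb z x" for x using Expo_bound[OF h, of xb z x] by linarith
    show ?thesis unfolding Zc_def using lb by (intro integral_mono exp_Expo_int h) auto
  qed
  then show "exp (- Bd h xb z) \<le> Zc h xb z" by simp
  have "Zc h xb z \<le> (\<integral>x. exp (Bd h xb z) \<partial>P)"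
    unfolding Zc_def using abs_le_D1[OF Expo_bound[OF h]]
    by (intro integral_mono exp_Expo_int h) auto
  then show "Zc h xb z \<le> exp (Bd h xb z)" by simp
qed

lemma Zc_pos: "h \<ge> 0 \<Longrightarrow> Zc h xb z > 0"
  using Zc_bounds(1)[of h xb z] by (meson exp_gt_zero less_le_trans)

lemma ln_Zc_bound:
  assumes h: "h \<ge> 0"
  shows "\<bar>ln (Zc h xb z)\<bar> \<le> Bd h xb z"
proof -
  have p: "Zc h xb z > 0" by (rule Zc_pos[OF h])
  have "ln (exp (- Bd h xb z)) \<le> ln (Zc h xb z)" using Zc_bounds(1)[OF h] p by (subst ln_le_cancel_iff) auto
  moreover have "ln (Zc h xb z) \<le> ln (exp (Bd h xb z))" using Zc_bounds(2)[OF h] p by (subst ln_le_cancel_iff) auto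
  ultimately show ?thesis by (simp add: abs_le_iff)
qed

lemma Zc_meas_joint[measurable]: "(\<lambda>w. Zc h (fst w) (snd w)) \<in> borel_measurable (borel \<Otimes>\<^sub>M borel)"
proof -
  have "(\<lambda>w. \<integral>x. (\<lambda>w x. exp (Expo h (fst w) (snd w) x)) w x \<partial>P) \<in> borel_measurable (borel \<Otimes>\<^sub>M borel)"
    by (rule PP.borel_measurable_lebesgue_integral) (simp add: Expo_def split_beta')
  then show ?thesis unfolding Zc_def by simp
qed

lemma Zc_meas_z[measurable]: "(\<lambda>z. Zc h xb z) \<in> borel_measurable borel"
proof -
  have "(\<lambda>z. (\<lambda>w. Zc h (fst w) (snd w)) (xb, z)) \<in> borel_measurable borel"
    by (rule measurable_compose[OF _ Zc_meas_joint]) simp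
  then show ?thesis by simp
qed

lemma psi_eq:
  assumes h: "h \<ge> 0"
  shows "psi P h = (\<integral>w. ln (Zc h (fst w) (snd w)) \<partial>(P \<Otimes>\<^sub>M NG))"
  unfolding psi_def
proof (rule Bochner_Integration.integral_cong[OF refl])
  fix w :: "real \<times> real"
  have "(\<integral>x. exp (sqrt h * snd w * x + h * x * fst w - h / 2 * x\<^sup>2) \<partial>P) = Zc h (fst w) (snd w)"
    unfolding Zc_def Expo_def
    by (rule integral_cong_AE) (use cl_AE in \<open>auto elim!: eventually_mono\<close>)
  then show "ln (\<integral>x. exp (sqrt h * snd w * x + h * x * fst w - h / 2 * x\<^sup>2) \<partial>P) = ln (Zc h (fst w) (snd w))"
    by simp
qed

definition G :: "real \<Rightarrow> real \<Rightarrow> real" where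
  "G h xb = (\<integral>z. ln (Zc h xb z) \<partial>NG)"

lemma int_abs_P: "integrable P (\<lambda>x. \<bar>x\<bar>)"
  by (rule PP.integrable_const_bound[where B=K]) (use AEK in auto)

lemma int_abs_P_le: "(\<integral>x. \<bar>x\<bar> \<partial>P) \<le> K"
proof -
  have "(\<integral>x. \<bar>x\<bar> \<partial>P) \<le> (\<integral>x. K \<partial>P)"
    by (rule integral_mono_AE) (use int_abs_P AEK in auto)
  then show ?thesis by simp
qed

lemma ln_Zc_int_prod:
  assumes h: "h \<ge> 0"
  shows "integrable (P \<Otimes>\<^sub>M NG) (\<lambda>w. ln (Zc h (fst w) (snd w)))"
proof -
  interpret NGp: prob_space NG by (rule NG_prob)
  interpret PN: pair_prob_space P NG ..
  have d1: "distr (P \<Otimes>\<^sub>M NG) NG snd = NG"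
    by (rule distr_pair_snd_gen[OF prob]) (rule NGp.sigma_finite_measure_axioms)
  have d2: "distr (P \<Otimes>\<^sub>M NG) P fst = P" by (rule NGp.distr_pair_fst)
  have i1: "integrable (P \<Otimes>\<^sub>M NG) (\<lambda>w. \<bar>snd w\<bar>)"
    using integrable_distr_eq[of snd "P \<Otimes>\<^sub>M NG" NG "\<lambda>z. \<bar>z\<bar>"] d1 NG_abs by simp
  have i2: "integrable (P \<Otimes>\<^sub>M NG) (\<lambda>w. \<bar>fst w\<bar>)"
    using integrable_distr_eq[of fst "P \<Otimes>\<^sub>M NG" P "\<lambda>z. \<bar>z\<bar>"] d2 int_abs_P by simp
  have ib: "integrable (P \<Otimes>\<^sub>M NG) (\<lambda>w. Bd h (fst w) (snd w))"
    unfolding Bd_def using i1 i2 by (intro Bochner_Integration.integrable_add integrable_mult_left) auto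
  show ?thesis
  proof (rule Bochner_Integration.integrable_bound[OF ib])
    show "(\<lambda>w. ln (Zc h (fst w) (snd w))) \<in> borel_measurable (P \<Otimes>\<^sub>M NG)" by measurable
    show "AE w in P \<Otimes>\<^sub>M NG. norm (ln (Zc h (fst w) (snd w))) \<le> norm (Bd h (fst w) (snd w))"
      using ln_Zc_bound[OF h] Bd_nonneg[OF h] by auto
  qed
qed

lemma psi_iter:
  assumes h: "h \<ge> 0"
  shows "psi P h = (\<integral>xb. G h xb \<partial>P)" and "integrable P (G h)"
proof -
  interpret NGp: prob_space NG by (rule NG_prob)
  interpret PN: pair_prob_space P NG ..
  have I: "integrable (P \<Otimes>\<^sub>M NG) (\<lambda>(x, y). ln (Zc h x y))"
    using ln_Zc_int_prod[OF h] by (simp add: split_beta')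
  show "psi P h = (\<integral>xb. G h xb \<partial>P)"
    unfolding psi_eq[OF h] G_def using PN.integral_fst[OF I] by (simp add: split_beta')
  show "integrable P (G h)"
    unfolding G_def using PN.integrable_fst[OF I] by simp
qed

lemma ln_Zc_int_z:
  assumes h: "h \<ge> 0"
  shows "integrable NG (\<lambda>z. ln (Zc h xb z))"
proof (rule Bochner_Integration.integrable_bound)
  interpret NGp: prob_space NG by (rule NG_prob)
  show "integrable NG (\<lambda>z. Bd h xb z)"
    unfolding Bd_def using NG_abs by (intro Bochner_Integration.integrable_add integrable_mult_left NGp.integrable_const) auto
  show "(\<lambda>z. ln (Zc h xb z)) \<in> borel_measurable NG" by measurable
  show "AE z in NG. norm (ln (Zc h xb z)) \<le> norm (Bd h xb z)"
    using ln_Zc_bound[OF h] Bd_nonneg[OF h] by auto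
qed

end

context psi_setup begin

lemma bounded_int:
  fixes f :: "real \<Rightarrow> real"
  assumes "f \<in> borel_measurable borel" "\<And>x. \<bar>f x\<bar> \<le> B"
  shows "integrable P f"
  by (rule PP.integrable_const_bound[where B=B]) (use assms in auto)

lemma gibbs_lower:
  fixes w Y :: "real \<Rightarrow> real"
  assumes wm[measurable]: "w \<in> borel_measurable borel" and wl: "\<And>x. wl \<le> w x" "wl > 0"
    and wu: "\<And>x. w x \<le> wu"
    and Ym[measurable]: "Y \<in> borel_measurable borel" and Yb: "\<And>x. \<bar>Y x\<bar> \<le> yb"
  shows "(\<integral>x. w x \<partial>P) * exp ((\<integral>x. w x * Y x \<partial>P)/(\<integral>x. w x \<partial>P)) \<le> (\<integral>x. w x * exp (Y x) \<partial>P)"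
proof -
  define Z where "Z = (\<integral>x. w x \<partial>P)"
  define m where "m = (\<integral>x. w x * Y x \<partial>P)/Z"
  have wabs: "\<bar>w x\<bar> \<le> wu" for x using wl(1)[of x] wl(2) wu[of x] by auto
  have iw: "integrable P w" by (rule bounded_int[OF wm wabs])
  have iwY: "integrable P (\<lambda>x. w x * Y x)"
  proof (rule bounded_int[where B="wu*yb"])
    fix x
    have "0 \<le> wu" using wabs[of x] by linarith
    then have "\<bar>w x\<bar> * \<bar>Y x\<bar> \<le> wu * yb" by (intro mult_mono wabs Yb) auto
    then show "\<bar>w x * Y x\<bar> \<le> wu * yb" by (simp add: abs_mult)
  qed simp
  have iwE: "integrable P (\<lambda>x. w x * exp (Y x))"
  proof (rule bounded_int[where B="wu*exp yb"])
    fix x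
    have "exp (Y x) \<le> exp yb" using Yb[of x] by simp
    then show "\<bar>w x * exp (Y x)\<bar> \<le> wu * exp yb" using wabs[of x] by (simp add: abs_mult mult_mono)
  qed simp
  have Zp: "Z > 0"
  proof -
    have "(\<integral>x. wl \<partial>P) \<le> Z" unfolding Z_def using wl iw by (intro integral_mono) auto
    then show ?thesis using wl(2) by simp
  qed
  have pt: "w x * (exp m * ((1 - m) + Y x)) \<le> w x * exp (Y x)" for x
  proof -
    have "1 + (Y x - m) \<le> exp (Y x - m)" by (rule exp_ge_add_one_self)
    then have "exp m * (1 + (Y x - m)) \<le> exp m * exp (Y x - m)" by (intro mult_left_mono) auto
    also have "\<dots> = exp (Y x)" by (simp add: exp_diff)
    finally have "exp m * ((1 - m) + Y x) \<le> exp (Y x)" by (simp add: algebra_simps)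
    moreover have "w x \<ge> 0" using wl(1)[of x] wl(2) by simp
    ultimately show ?thesis by (rule mult_left_mono)
  qed
  have eq: "(\<lambda>x. w x * (exp m * ((1 - m) + Y x))) = (\<lambda>x. exp m * ((1 - m) * w x + w x * Y x))"
    by (rule ext) (simp add: algebra_simps)
  have "(\<integral>x. w x * (exp m * ((1 - m) + Y x)) \<partial>P) = exp m * ((1-m) * Z + m * Z)"
    unfolding eq using iw iwY Zp by (simp add: Z_def m_def)
  also have "\<dots> = Z * exp m" by (simp add: algebra_simps)
  finally have "Z * exp m = (\<integral>x. w x * (exp m * ((1 - m) + Y x)) \<partial>P)" by simp
  also have "\<dots> \<le> (\<integral>x. w x * exp (Y x) \<partial>P)"
    by (rule integral_mono[OF _ iwE pt]) (unfold eq, use iw iwY in simp)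
  finally show ?thesis unfolding Z_def m_def .
qed

lemma Zw_pos:
  fixes w :: "real \<Rightarrow> real"
  assumes wm[measurable]: "w \<in> borel_measurable borel" and wl: "\<And>x. wl \<le> w x" "wl > 0"
    and wu: "\<And>x. w x \<le> wu"
  shows "(\<integral>x. w x \<partial>P) > 0" and "integrable P w"
proof -
  have wabs: "\<bar>w x\<bar> \<le> wu" for x using wl(1)[of x] wl(2) wu[of x] by auto
  show iw: "integrable P w" by (rule bounded_int[OF wm wabs])
  have "(\<integral>x. wl \<partial>P) \<le> (\<integral>x. w x \<partial>P)" using wl iw by (intro integral_mono) auto
  then show "(\<integral>x. w x \<partial>P) > 0" using wl(2) by simp
qed

lemma hoeff_core:
  fixes w f :: "real \<Rightarrow> real" and l :: real
  assumes wm[measurable]: "w \<in> borel_measurable borel" and wl: "\<And>x. wl \<le> w x" "wl > 0"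
    and wu: "\<And>x. w x \<le> wu"
    and fm[measurable]: "f \<in> borel_measurable borel" and fb: "\<And>x. \<bar>f x\<bar> \<le> K" and l: "l > 0"
  shows "(\<integral>x. (w x / (\<integral>x. w x \<partial>P)) * exp (l * (f x - (\<integral>x. (w x / (\<integral>x. w x \<partial>P)) * f x \<partial>P))) \<partial>P)
          \<le> exp (l\<^sup>2 * K\<^sup>2 / 2)"
proof -
  define Z where "Z = (\<integral>x. w x \<partial>P)"
  have Zp: "Z > 0" and iw: "integrable P w" unfolding Z_def using Zw_pos[OF wm wl wu] by auto
  define g where "g = (\<lambda>x. w x / Z)"
  have gm[measurable]: "g \<in> borel_measurable borel" unfolding g_def by measurable
  have g0: "g x \<ge> 0" for x unfolding g_def using wl(1)[of x] wl(2) Zp by simp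
  have gb: "\<bar>g x\<bar> \<le> wu / Z" for x unfolding g_def using wl(1)[of x] wl(2) wu[of x] Zp
    by (simp add: divide_right_mono)
  have ig: "integrable P g" by (rule bounded_int[OF gm gb])
  have intg: "(\<integral>x. g x \<partial>P) = 1" unfolding g_def using Zp by (simp add: Z_def)
  define mu where "mu = density P (\<lambda>x. ennreal (g x))"
  have space_mu: "space mu = UNIV" unfolding mu_def by simp
  have sets_mu[measurable_cong]: "sets mu = sets borel" unfolding mu_def by (simp add: sets_P)
  have pmu: "prob_space mu"
  proof (rule prob_spaceI)
    have "emeasure mu (space mu) = (\<integral>\<^sup>+ x. ennreal (g x) * indicator UNIV x \<partial>P)"
      unfolding mu_def by (subst emeasure_density) auto
    also have "\<dots> = (\<integral>\<^sup>+ x. ennreal (g x) \<partial>P)" by simp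
    also have "\<dots> = ennreal (\<integral>x. g x \<partial>P)" by (rule nn_integral_eq_integral[OF ig]) (use g0 in auto)
    finally show "emeasure mu (space mu) = 1" using intg by simp
  qed
  interpret IB: interval_bounded_random_variable mu f "-K" K
  proof (intro interval_bounded_random_variable.intro pmu interval_bounded_random_variable_axioms.intro)
    show "f \<in> borel_measurable mu" by simp
    have "f x \<in> {- K..K}" for x using fb[of x] by (auto simp: abs_le_iff)
    then show "AE x in mu. f x \<in> {- K..K}" by simp
  qed
  have H: "nn_integral mu (\<lambda>x. ennreal (exp (l * (f x - integral\<^sup>L mu f)))) \<le> ennreal (exp (l\<^sup>2 * (K - - K)\<^sup>2 / 8))"
    by (rule IB.Hoeffdings_lemma_nn_integral[OF l])
  have E: "integral\<^sup>L mu f = (\<integral>x. g x * f x \<partial>P)"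
    unfolding mu_def by (subst integral_density) (use g0 in auto)
  define mf where "mf = (\<integral>x. g x * f x \<partial>P)"
  have ie: "integrable P (\<lambda>x. g x * exp (l * (f x - mf)))"
  proof (rule bounded_int[where B="wu / Z * exp (l * (K + \<bar>mf\<bar>))"])
    fix x
    have "l * (f x - mf) \<le> l * (K + \<bar>mf\<bar>)" using fb[of x] l by (intro mult_left_mono) auto
    then have "exp (l * (f x - mf)) \<le> exp (l * (K + \<bar>mf\<bar>))" by simp
    moreover have "0 \<le> wu / Z" using gb[of x] by linarith
    ultimately have "\<bar>g x\<bar> * exp (l * (f x - mf)) \<le> wu / Z * exp (l * (K + \<bar>mf\<bar>))"
      by (intro mult_mono gb) auto
    then show "\<bar>g x * exp (l * (f x - mf))\<bar> \<le> wu / Z * exp (l * (K + \<bar>mf\<bar>))" by (simp add: abs_mult)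
  qed simp
  have "nn_integral mu (\<lambda>x. ennreal (exp (l * (f x - mf)))) = (\<integral>\<^sup>+ x. ennreal (g x) * ennreal (exp (l * (f x - mf))) \<partial>P)"
    unfolding mu_def by (subst nn_integral_density) auto
  also have "\<dots> = (\<integral>\<^sup>+ x. ennreal (g x * exp (l * (f x - mf))) \<partial>P)"
    using g0 by (intro nn_integral_cong) (simp add: ennreal_mult)
  also have "\<dots> = ennreal (\<integral>x. g x * exp (l * (f x - mf)) \<partial>P)"
    by (rule nn_integral_eq_integral[OF ie]) (use g0 in auto)
  finally have "ennreal (\<integral>x. g x * exp (l * (f x - mf)) \<partial>P) \<le> ennreal (exp (l\<^sup>2 * (K - - K)\<^sup>2 / 8))"
    using H unfolding E mf_def by simp
  then have "(\<integral>x. g x * exp (l * (f x - mf)) \<partial>P) \<le> exp (l\<^sup>2 * (K - - K)\<^sup>2 / 8)"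
    by (subst (asm) ennreal_le_iff) auto
  also have "exp (l\<^sup>2 * (K - - K)\<^sup>2 / 8) = exp (l\<^sup>2 * K\<^sup>2 / 2)" by (simp add: power2_eq_square algebra_simps)
  finally show ?thesis unfolding mf_def g_def Z_def .
qed

end

context psi_setup begin

lemma hoeff_w:
  fixes w :: "real \<Rightarrow> real" and l :: real
  assumes wm[measurable]: "w \<in> borel_measurable borel" and wl: "\<And>x. wl \<le> w x" "wl > 0"
    and wu: "\<And>x. w x \<le> wu"
  shows "(\<integral>x. w x * exp (l * cl x) \<partial>P)
     \<le> (\<integral>x. w x \<partial>P) * exp (l * (\<integral>x. (w x / (\<integral>x. w x \<partial>P)) * cl x \<partial>P) + l\<^sup>2 * K\<^sup>2 / 2)"
proof -
  define Z where "Z = (\<integral>x. w x \<partial>P)"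
  have Zp: "Z > 0" and iw: "integrable P w" unfolding Z_def using Zw_pos[OF wm wl wu] by auto
  define m where "m = (\<integral>x. (w x / Z) * cl x \<partial>P)"
  have core: "(\<integral>x. (w x / Z) * exp (l * (cl x - m)) \<partial>P) \<le> exp (l\<^sup>2 * K\<^sup>2 / 2)"
  proof (cases "l > 0")
    case True
    show ?thesis using hoeff_core[OF wm wl wu cl_meas cl_bound True] unfolding Z_def m_def .
  next
    case False
    show ?thesis
    proof (cases "l = 0")
      case True
      have "(\<integral>x. (w x / Z) * exp (l * (cl x - m)) \<partial>P) = (\<integral>x. w x \<partial>P) / Z" using True by simp
      also have "\<dots> = 1" using Zp by (simp add: Z_def)
      finally show ?thesis using True by simp
    next
      case False2: False
      then have lp: "-l > 0" using False by simp
      have mb: "\<bar>- cl x\<bar> \<le> K" for x using cl_bound[of x] by simp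
      have H: "(\<integral>x. (w x / Z) * exp ((-l) * (- cl x - (\<integral>x. (w x / Z) * (- cl x) \<partial>P))) \<partial>P) \<le> exp ((-l)\<^sup>2 * K\<^sup>2 / 2)"
        using hoeff_core[OF wm wl wu _ mb lp] unfolding Z_def by simp
      have "(\<integral>x. (w x / Z) * (- cl x) \<partial>P) = - m" unfolding m_def by simp
      then show ?thesis using H by (simp add: algebra_simps)
    qed
  qed
  have pt: "w x * exp (l * cl x) = (Z * exp (l * m)) * ((w x / Z) * exp (l * (cl x - m)))" for x
  proof -
    have e: "exp (l * cl x) = exp (l*m) * exp (l*(cl x - m))" by (simp add: mult_exp_exp algebra_simps)
    show ?thesis unfolding e using Zp by (simp add: field_simps)
  qed
  have "(\<integral>x. w x * exp (l * cl x) \<partial>P) = (Z * exp (l * m)) * (\<integral>x. (w x / Z) * exp (l * (cl x - m)) \<partial>P)"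
    unfolding pt by simp
  also have "\<dots> \<le> (Z * exp (l * m)) * exp (l\<^sup>2 * K\<^sup>2 / 2)"
    using Zp core by (intro mult_left_mono) auto
  also have "\<dots> = Z * exp (l * m + l\<^sup>2 * K\<^sup>2 / 2)" by (simp add: exp_add)
  finally show ?thesis unfolding Z_def m_def .
qed

definition mm :: "real \<Rightarrow> real \<Rightarrow> real \<Rightarrow> real" where
  "mm h xb z = (\<integral>x. (exp (Expo h xb z x) / Zc h xb z) * cl x \<partial>P)"

lemma bint:
  fixes f :: "real \<Rightarrow> real"
  assumes "f \<in> borel_measurable borel" "\<exists>B. \<forall>x. \<bar>f x\<bar> \<le> B"
  shows "integrable P f"
  using assms bounded_int by blast

lemma bmul: "\<forall>x. \<bar>f x\<bar> \<le> A \<Longrightarrow> \<forall>x. \<bar>g x\<bar> \<le> (B::real) \<Longrightarrow> \<forall>x. \<bar>f x * g x\<bar> \<le> A * B"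
proof (intro allI)
  fix x assume a: "\<forall>x. \<bar>f x\<bar> \<le> A" and b: "\<forall>x. \<bar>g x\<bar> \<le> B"
  have "0 \<le> A" using a[rule_format, of x] by linarith
  then have "\<bar>f x\<bar> * \<bar>g x\<bar> \<le> A * B" using a b by (intro mult_mono) auto
  then show "\<bar>f x * g x\<bar> \<le> A * B" by (simp add: abs_mult)
qed

lemma pointwise:
  fixes h1 D h2 xb z1 z2 z' :: real
  assumes h1: "h1 \<ge> 0" and D: "D \<ge> 0" and h2: "h2 = h1 + D"
    and zz: "sqrt h2 * z' = sqrt h1 * z1 + sqrt D * z2"
  shows "ln (Zc h1 xb z1) + sqrt D * z2 * mm h1 xb z1 - D * (K * \<bar>xb\<bar> + K\<^sup>2/2) \<le> ln (Zc h2 xb z')"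
    and "ln (Zc h2 xb z') \<le> ln (Zc h1 xb z1) + sqrt D * z2 * mm h1 xb z1 + D * K * \<bar>xb\<bar> + D * z2\<^sup>2 * K\<^sup>2/2"
proof -
  define w where "w = (\<lambda>x. exp (Expo h1 xb z1 x))"
  have wm[measurable]: "w \<in> borel_measurable borel" unfolding w_def by measurable
  have wl: "exp (- Bd h1 xb z1) \<le> w x" for x
    unfolding w_def using Expo_bound[OF h1, of xb z1 x] by (simp add: abs_le_iff)
  have wu: "w x \<le> exp (Bd h1 xb z1)" for x
    unfolding w_def using Expo_bound[OF h1, of xb z1 x] by (simp add: abs_le_iff)
  have wabs: "\<forall>x. \<bar>w x\<bar> \<le> exp (Bd h1 xb z1)" using wu by (simp add: w_def)
  define Z where "Z = (\<integral>x. w x \<partial>P)"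
  have ZZ: "Z = Zc h1 xb z1" unfolding Z_def w_def Zc_def ..
  have Zp: "Z > 0" unfolding ZZ by (rule Zc_pos[OF h1])
  have mmZ: "mm h1 xb z1 = (\<integral>x. (w x / Z) * cl x \<partial>P)" unfolding mm_def ZZ w_def ..
  have clabs: "\<forall>x. \<bar>cl x\<bar> \<le> K" using cl_bound by blast
  define c where "c = K * \<bar>xb\<bar> + K\<^sup>2/2"
  define Y where "Y = (\<lambda>x. sqrt D * z2 * cl x + D * (cl x * xb - (cl x)\<^sup>2/2))"
  have Ym[measurable]: "Y \<in> borel_measurable borel" unfolding Y_def by measurable
  have q1: "\<bar>cl x * xb - (cl x)\<^sup>2/2\<bar> \<le> c" for x
  proof -
    have "\<bar>cl x * xb\<bar> \<le> K * \<bar>xb\<bar>" using cl_bound[of x] by (simp add: abs_mult mult_right_mono)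
    moreover have "(cl x)\<^sup>2 \<le> K\<^sup>2" using cl_bound[of x] K0 by (metis abs_le_square_iff abs_of_nonneg)
    moreover have "0 \<le> (cl x)\<^sup>2" by simp
    ultimately show ?thesis unfolding c_def abs_le_iff by (intro conjI) linarith+
  qed
  have q2: "cl x * xb - (cl x)\<^sup>2/2 \<le> K * \<bar>xb\<bar>" for x
  proof -
    have "cl x * xb \<le> \<bar>cl x * xb\<bar>" by (rule abs_ge_self)
    also have "\<dots> = \<bar>cl x\<bar> * \<bar>xb\<bar>" by (rule abs_mult)
    also have "\<dots> \<le> K * \<bar>xb\<bar>" by (rule mult_right_mono[OF cl_bound abs_ge_zero])
    finally have "cl x * xb \<le> K * \<bar>xb\<bar>" .
    moreover have "0 \<le> (cl x)\<^sup>2" by simp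
    ultimately show ?thesis by linarith
  qed
  define Yb where "Yb = sqrt D * \<bar>z2\<bar> * K + D * c"
  have Yabs: "\<forall>x. \<bar>Y x\<bar> \<le> Yb"
  proof
    fix x
    have "\<bar>sqrt D * z2 * cl x\<bar> \<le> sqrt D * \<bar>z2\<bar> * K" using cl_bound[of x] D by (simp add: abs_mult mult_left_mono)
    moreover have "\<bar>D * (cl x * xb - (cl x)\<^sup>2/2)\<bar> \<le> D * c" using q1[of x] D by (simp add: abs_mult mult_left_mono)
    ultimately show "\<bar>Y x\<bar> \<le> Yb" unfolding Y_def Yb_def by linarith
  qed
  have eqE: "Expo h2 xb z' x = Expo h1 xb z1 x + Y x" for x
  proof -
    have "sqrt h2 * z' * cl x = (sqrt h1 * z1 + sqrt D * z2) * cl x" using zz by simp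
    then show ?thesis unfolding Expo_def Y_def h2 by (simp add: algebra_simps)
  qed
  have Z2: "Zc h2 xb z' = (\<integral>x. w x * exp (Y x) \<partial>P)"
    unfolding Zc_def w_def eqE by (simp add: exp_add)
  have Z2p: "Zc h2 xb z' > 0" using Zc_pos h1 D h2 by simp
  have iwY: "integrable P (\<lambda>x. w x * Y x)" using bmul[OF wabs Yabs] by (intro bint) auto
  have iwcl: "integrable P (\<lambda>x. w x * cl x)" using bmul[OF wabs clabs] by (intro bint) auto
  have iw: "integrable P w" using wabs by (intro bint) auto
  have GL: "Z * exp ((\<integral>x. w x * Y x \<partial>P)/Z) \<le> Zc h2 xb z'"
    unfolding Z2 Z_def using gibbs_lower[OF wm wl _ wu Ym, of Yb] Yabs by auto
  have "ln (Z * exp ((\<integral>x. w x * Y x \<partial>P)/Z)) \<le> ln (Zc h2 xb z')"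
    using GL Zp Z2p by (subst ln_le_cancel_iff) auto
  then have L1: "ln Z + (\<integral>x. w x * Y x \<partial>P)/Z \<le> ln (Zc h2 xb z')" using Zp by (simp add: ln_mult)
  have ptl: "sqrt D * z2 * (w x * cl x) - D * c * w x \<le> w x * Y x" for x
  proof -
    have "w x \<ge> 0" unfolding w_def by simp
    moreover have "- c \<le> cl x * xb - (cl x)\<^sup>2/2" using q1[of x] by (simp add: abs_le_iff)
    ultimately have "w x * (D * (-c)) \<le> w x * (D * (cl x * xb - (cl x)\<^sup>2/2))"
      using D by (intro mult_left_mono) auto
    then show ?thesis unfolding Y_def by (simp add: algebra_simps)
  qed
  have "(\<integral>x. sqrt D * z2 * (w x * cl x) - D * c * w x \<partial>P) \<le> (\<integral>x. w x * Y x \<partial>P)"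
    by (rule integral_mono[OF _ iwY ptl]) (use iw iwcl in simp)
  then have "sqrt D * z2 * (\<integral>x. w x * cl x \<partial>P) - D * c * Z \<le> (\<integral>x. w x * Y x \<partial>P)"
    using iw iwcl by (simp add: Z_def)
  then have "(sqrt D * z2 * (\<integral>x. w x * cl x \<partial>P) - D * c * Z)/Z \<le> (\<integral>x. w x * Y x \<partial>P)/Z"
    using Zp by (intro divide_right_mono) auto
  moreover have "(sqrt D * z2 * (\<integral>x. w x * cl x \<partial>P) - D * c * Z)/Z = sqrt D * z2 * mm h1 xb z1 - D * c"
    unfolding mmZ using Zp by (simp add: field_simps)
  ultimately have "sqrt D * z2 * mm h1 xb z1 - D * c \<le> (\<integral>x. w x * Y x \<partial>P)/Z" by simp
  then show "ln (Zc h1 xb z1) + sqrt D * z2 * mm h1 xb z1 - D * (K * \<bar>xb\<bar> + K\<^sup>2/2) \<le> ln (Zc h2 xb z')"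
    using L1 unfolding ZZ c_def by linarith
  define l where "l = sqrt D * z2"
  have elabs: "\<forall>x. \<bar>exp (l * cl x)\<bar> \<le> exp (\<bar>l\<bar> * K)"
  proof
    fix x
    have "l * cl x \<le> \<bar>l * cl x\<bar>" by (rule abs_ge_self)
    also have "\<dots> = \<bar>l\<bar> * \<bar>cl x\<bar>" by (rule abs_mult)
    also have "\<dots> \<le> \<bar>l\<bar> * K" by (rule mult_left_mono[OF cl_bound abs_ge_zero])
    finally have "l * cl x \<le> \<bar>l\<bar> * K" .
    then show "\<bar>exp (l * cl x)\<bar> \<le> exp (\<bar>l\<bar> * K)" by simp
  qed
  have eYabs: "\<forall>x. \<bar>exp (Y x)\<bar> \<le> exp Yb" using Yabs by (simp add: abs_le_iff)
  have iwe: "integrable P (\<lambda>x. w x * exp (l * cl x))" using bmul[OF wabs elabs] by (intro bint) auto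
  have iwE: "integrable P (\<lambda>x. w x * exp (Y x))" using bmul[OF wabs eYabs] by (intro bint) auto
  have ptu: "w x * exp (Y x) \<le> exp (D * K * \<bar>xb\<bar>) * (w x * exp (l * cl x))" for x
  proof -
    have "D * (cl x * xb - (cl x)\<^sup>2/2) \<le> D * (K * \<bar>xb\<bar>)" by (rule mult_left_mono[OF q2 D])
    then have "Y x \<le> l * cl x + D * K * \<bar>xb\<bar>"
      unfolding Y_def l_def by (simp add: algebra_simps)
    then have "exp (Y x) \<le> exp (D * K * \<bar>xb\<bar>) * exp (l * cl x)" by (simp add: mult_exp_exp algebra_simps)
    moreover have "w x \<ge> 0" unfolding w_def by simp
    ultimately show ?thesis by (simp add: mult_left_mono algebra_simps)
  qed
  have "Zc h2 xb z' \<le> (\<integral>x. exp (D * K * \<bar>xb\<bar>) * (w x * exp (l * cl x)) \<partial>P)"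
    unfolding Z2 by (rule integral_mono[OF iwE _ ptu]) (use iwe in simp)
  also have "\<dots> = exp (D * K * \<bar>xb\<bar>) * (\<integral>x. w x * exp (l * cl x) \<partial>P)" by simp
  also have "\<dots> \<le> exp (D * K * \<bar>xb\<bar>) * (Z * exp (l * mm h1 xb z1 + l\<^sup>2 * K\<^sup>2 / 2))"
    using hoeff_w[OF wm wl _ wu, of l] unfolding mmZ Z_def by (intro mult_left_mono) auto
  finally have U: "Zc h2 xb z' \<le> exp (D * K * \<bar>xb\<bar>) * (Z * exp (l * mm h1 xb z1 + l\<^sup>2 * K\<^sup>2 / 2))" .
  have "ln (Zc h2 xb z') \<le> ln (exp (D * K * \<bar>xb\<bar>) * (Z * exp (l * mm h1 xb z1 + l\<^sup>2 * K\<^sup>2 / 2)))"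
    using U Z2p Zp by (subst ln_le_cancel_iff) auto
  also have "\<dots> = D * K * \<bar>xb\<bar> + ln Z + l * mm h1 xb z1 + l\<^sup>2 * K\<^sup>2 / 2"
    using Zp by (simp add: ln_mult)
  also have "l\<^sup>2 = D * z2\<^sup>2" unfolding l_def using D by (simp add: power_mult_distrib)
  finally show "ln (Zc h2 xb z') \<le> ln (Zc h1 xb z1) + sqrt D * z2 * mm h1 xb z1 + D * K * \<bar>xb\<bar> + D * z2\<^sup>2 * K\<^sup>2/2"
    unfolding ZZ l_def by (simp add: algebra_simps)
qed

end

context psi_setup begin

lemma NG_int_lin: "(\<integral>z. c0 + c1 * z \<partial>NG) = c0" 
proof -
  interpret NGp: prob_space NG by (rule NG_prob)
  have "(\<integral>z. c0 + c1 * z \<partial>NG) = (\<integral>z. c0 \<partial>NG) + (\<integral>z. c1 * z \<partial>NG)"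
    by (rule Bochner_Integration.integral_add) (use NG_z in auto)
  also have "\<dots> = c0" using NG_int_z NGp.prob_space by simp
  finally show ?thesis .
qed

lemma NG_int_quad: "(\<integral>z. c0 + c1 * z + c2 * z\<^sup>2 \<partial>NG) = c0 + c2" 
proof -
  interpret NGp: prob_space NG by (rule NG_prob)
  have "(\<integral>z. c0 + c1 * z + c2 * z\<^sup>2 \<partial>NG) = (\<integral>z. c0 + c1 * z \<partial>NG) + (\<integral>z. c2 * z\<^sup>2 \<partial>NG)"
    by (rule Bochner_Integration.integral_add) (use NG_z NG_z2 in auto)
  also have "\<dots> = c0 + c2" using NG_int_lin NG_int_z2 by simp
  finally show ?thesis .
qed

lemma int_sandwich:
  fixes F lo up :: "real \<Rightarrow> real"
  assumes "F \<in> borel_measurable borel" "integrable NG lo" "integrable NG up"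
    "\<And>z. lo z \<le> F z" "\<And>z. F z \<le> up z"
  shows "integrable NG F"
proof (rule Bochner_Integration.integrable_bound[where f="\<lambda>z. \<bar>lo z\<bar> + \<bar>up z\<bar>"])
  show "integrable NG (\<lambda>z. \<bar>lo z\<bar> + \<bar>up z\<bar>)" using assms by auto
  show "F \<in> borel_measurable NG" using assms by simp
  have "\<bar>F z\<bar> \<le> \<bar>lo z\<bar> + \<bar>up z\<bar>" for z
  proof -
    have "lo z \<le> F z" "F z \<le> up z" using assms(4,5) by auto
    moreover have "lo z \<ge> - \<bar>lo z\<bar>" "up z \<le> \<bar>up z\<bar>" "0 \<le> \<bar>lo z\<bar>" "0 \<le> \<bar>up z\<bar>" by auto
    ultimately show ?thesis unfolding abs_le_iff by linarith
  qed
  then show "AE z in NG. norm (F z) \<le> norm (\<bar>lo z\<bar> + \<bar>up z\<bar>)" by simp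
qed

lemma step_z2:
  fixes h1 D h2 xb z1 :: real
  assumes h1: "h1 \<ge> 0" and D: "D \<ge> 0" and h2: "h2 = h1 + D" and h2p: "h2 > 0"
  defines "a \<equiv> sqrt (h1/h2)" and "b \<equiv> sqrt (D/h2)"
  shows "integrable NG (\<lambda>z2. ln (Zc h2 xb (a*z1 + b*z2)))"
    and "ln (Zc h1 xb z1) - D * (K * \<bar>xb\<bar> + K\<^sup>2/2) \<le> (\<integral>z2. ln (Zc h2 xb (a*z1 + b*z2)) \<partial>NG)"
    and "(\<integral>z2. ln (Zc h2 xb (a*z1 + b*z2)) \<partial>NG) \<le> ln (Zc h1 xb z1) + D * K * \<bar>xb\<bar> + D * K\<^sup>2/2"
proof -
  have zz: "sqrt h2 * (a*z1 + b*z2) = sqrt h1 * z1 + sqrt D * z2" for z2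
  proof -
    have "sqrt h2 * a = sqrt h1" unfolding a_def using h2p by (simp add: real_sqrt_mult[symmetric])
    moreover have "sqrt h2 * b = sqrt D" unfolding b_def using h2p by (simp add: real_sqrt_mult[symmetric])
    moreover have "sqrt h2 * (a*z1 + b*z2) = (sqrt h2 * a) * z1 + (sqrt h2 * b) * z2" by (simp add: algebra_simps)
    ultimately show ?thesis by simp
  qed
  define F where "F = (\<lambda>z2. ln (Zc h2 xb (a*z1 + b*z2)))"
  define m where "m = mm h1 xb z1"
  define L0 where "L0 = ln (Zc h1 xb z1)"
  have lo: "L0 + sqrt D * m * z2 + (- D * (K * \<bar>xb\<bar> + K\<^sup>2/2)) \<le> F z2" for z2
    using pointwise(1)[OF h1 D h2 zz[of z2], of xb] unfolding F_def m_def L0_def by (simp add: algebra_simps)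
  have up: "F z2 \<le> (L0 + D * K * \<bar>xb\<bar>) + sqrt D * m * z2 + (D * K\<^sup>2/2) * z2\<^sup>2" for z2
    using pointwise(2)[OF h1 D h2 zz[of z2], of xb] unfolding F_def m_def L0_def by (simp add: algebra_simps)
  interpret NGp: prob_space NG by (rule NG_prob)
  have ilo: "integrable NG (\<lambda>z2. L0 + sqrt D * m * z2 + (- D * (K * \<bar>xb\<bar> + K\<^sup>2/2)))"
    using NG_z by auto
  have iup: "integrable NG (\<lambda>z2. (L0 + D * K * \<bar>xb\<bar>) + sqrt D * m * z2 + (D * K\<^sup>2/2) * z2\<^sup>2)"
    using NG_z NG_z2 by auto
  have Fm: "F \<in> borel_measurable borel" unfolding F_def by measurable
  have iF: "integrable NG F" by (rule int_sandwich[OF Fm ilo iup lo up])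
  then show "integrable NG (\<lambda>z2. ln (Zc h2 xb (a*z1 + b*z2)))" unfolding F_def .
  have "(\<integral>z2. L0 + sqrt D * m * z2 + (- D * (K * \<bar>xb\<bar> + K\<^sup>2/2)) \<partial>NG) \<le> (\<integral>z2. F z2 \<partial>NG)"
    by (rule integral_mono[OF ilo iF lo])
  moreover have "(\<integral>z2. L0 + sqrt D * m * z2 + (- D * (K * \<bar>xb\<bar> + K\<^sup>2/2)) \<partial>NG) = L0 - D * (K * \<bar>xb\<bar> + K\<^sup>2/2)"
    using NG_int_lin[of "L0 - D * (K * \<bar>xb\<bar> + K\<^sup>2/2)" "sqrt D * m"] by (simp add: algebra_simps)
  ultimately show "ln (Zc h1 xb z1) - D * (K * \<bar>xb\<bar> + K\<^sup>2/2) \<le> (\<integral>z2. ln (Zc h2 xb (a*z1 + b*z2)) \<partial>NG)"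
    unfolding F_def L0_def by simp
  have "(\<integral>z2. F z2 \<partial>NG) \<le> (\<integral>z2. (L0 + D * K * \<bar>xb\<bar>) + sqrt D * m * z2 + (D * K\<^sup>2/2) * z2\<^sup>2 \<partial>NG)"
    by (rule integral_mono[OF iF iup up])
  also have "\<dots> = L0 + D * K * \<bar>xb\<bar> + D * K\<^sup>2/2" by (rule NG_int_quad)
  finally show "(\<integral>z2. ln (Zc h2 xb (a*z1 + b*z2)) \<partial>NG) \<le> ln (Zc h1 xb z1) + D * K * \<bar>xb\<bar> + D * K\<^sup>2/2"
    unfolding F_def L0_def .
qed

lemma step_G:
  fixes h1 D h2 xb :: real
  assumes h1: "h1 \<ge> 0" and D: "D \<ge> 0" and h2: "h2 = h1 + D" and h2p: "h2 > 0"
  shows "\<bar>G h2 xb - G h1 xb\<bar> \<le> D * (K * \<bar>xb\<bar> + K\<^sup>2/2)"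
proof -
  define a where "a = sqrt (h1/h2)"
  define b where "b = sqrt (D/h2)"
  have a2: "a\<^sup>2 = h1/h2" unfolding a_def using h1 h2p by simp
  have b2: "b\<^sup>2 = D/h2" unfolding b_def using D h2p by simp
  have "h1/h2 + D/h2 = 1" using h2 h2p by (simp add: add_divide_distrib[symmetric])
  then have ab: "a \<ge> 0" "b \<ge> 0" "a\<^sup>2 + b\<^sup>2 = 1" unfolding a2 b2 using h1 D h2p by (auto simp: a_def b_def)
  have h2n: "h2 \<ge> 0" using h2p by simp
  have fm: "(\<lambda>z. ln (Zc h2 xb z)) \<in> borel_measurable borel" by measurable
  have dec: "G h2 xb = (\<integral>z1. (\<integral>z2. ln (Zc h2 xb (a*z1 + b*z2)) \<partial>NG) \<partial>NG)"
    unfolding G_def by (rule gauss_decomp(2)[OF fm ln_Zc_int_z[OF h2n] ab])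
  interpret NGp: prob_space NG by (rule NG_prob)
  interpret N2: pair_prob_space NG NG ..
  have I2: "integrable (NG \<Otimes>\<^sub>M NG) (\<lambda>(z1, z2). ln (Zc h2 xb (a*z1 + b*z2)))"
    using gauss_decomp(1)[OF fm ln_Zc_int_z[OF h2n] ab] by (simp add: split_beta')
  have iI: "integrable NG (\<lambda>z1. \<integral>z2. ln (Zc h2 xb (a*z1 + b*z2)) \<partial>NG)"
    by (rule N2.integrable_fst[OF I2])
  have i1: "integrable NG (\<lambda>z1. ln (Zc h1 xb z1))" by (rule ln_Zc_int_z[OF h1])
  have lo: "G h1 xb - D * (K * \<bar>xb\<bar> + K\<^sup>2/2) \<le> G h2 xb"
  proof -
    have "(\<integral>z1. ln (Zc h1 xb z1) - D * (K * \<bar>xb\<bar> + K\<^sup>2/2) \<partial>NG) \<le> G h2 xb"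
      unfolding dec using step_z2(2)[OF h1 D h2 h2p] i1 iI unfolding a_def b_def
      by (intro integral_mono) auto
    then show ?thesis using i1 NGp.prob_space unfolding G_def by simp
  qed
  have up: "G h2 xb \<le> G h1 xb + (D * K * \<bar>xb\<bar> + D * K\<^sup>2/2)"
  proof -
    have "G h2 xb \<le> (\<integral>z1. ln (Zc h1 xb z1) + (D * K * \<bar>xb\<bar> + D * K\<^sup>2/2) \<partial>NG)"
      unfolding dec using step_z2(3)[OF h1 D h2 h2p] i1 iI unfolding a_def b_def
      by (intro integral_mono) (auto simp: algebra_simps)
    then show ?thesis using i1 NGp.prob_space unfolding G_def by simp
  qed
  show ?thesis using lo up by (simp add: abs_le_iff algebra_simps)
qed

lemma psi_lip_le:
  fixes x y :: real
  assumes "0 \<le> x" "x \<le> y"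
  shows "\<bar>psi P y - psi P x\<bar> \<le> (3/2 * K\<^sup>2) * (y - x)"
proof (cases "y = 0")
  case True
  then show ?thesis using assms by simp
next
  case False
  define D where "D = y - x"
  have D: "D \<ge> 0" "y = x + D" "y > 0" using assms False by (auto simp: D_def)
  have y0: "y \<ge> 0" using D by simp
  have iy: "integrable P (G y)" by (rule psi_iter(2)[OF y0])
  have ix: "integrable P (G x)" by (rule psi_iter(2)[OF assms(1)])
  have ib: "integrable P (\<lambda>xb. D * (K * \<bar>xb\<bar> + K\<^sup>2/2))" using int_abs_P by auto
  have "psi P y - psi P x = (\<integral>xb. G y xb - G x xb \<partial>P)"
    unfolding psi_iter(1)[OF y0] psi_iter(1)[OF assms(1)] using iy ix by simp
  then have "\<bar>psi P y - psi P x\<bar> \<le> (\<integral>xb. \<bar>G y xb - G x xb\<bar> \<partial>P)"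
    using integral_abs_bound by simp
  also have "\<dots> \<le> (\<integral>xb. D * (K * \<bar>xb\<bar> + K\<^sup>2/2) \<partial>P)"
    using step_G[OF assms(1) D(1) D(2) D(3)] iy ix ib by (intro integral_mono) auto
  also have "\<dots> = D * (K * (\<integral>xb. \<bar>xb\<bar> \<partial>P) + K\<^sup>2/2)" using int_abs_P by simp
  also have "\<dots> \<le> D * (K * K + K\<^sup>2/2)"
    using int_abs_P_le K0 D by (intro mult_left_mono add_right_mono) auto
  also have "\<dots> = (3/2 * K\<^sup>2) * (y - x)" unfolding D_def by (simp add: power2_eq_square algebra_simps)
  finally show ?thesis .
qed

end

lemma psi_lip:
  fixes P :: "real measure"
  assumes "prob_space P" and "sets P = sets borel"
    and "\<exists>K. AE x in P. \<bar>x\<bar> \<le> K"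
  shows "\<exists>L\<ge>0. \<forall>x y. x \<ge> 0 \<longrightarrow> y \<ge> 0 \<longrightarrow> \<bar>psi P x - psi P y\<bar> \<le> L * \<bar>x - y\<bar>"
proof -
  obtain K where K: "AE x in P. \<bar>x\<bar> \<le> K" using assms(3) by blast
  define K' where "K' = max K 0"
  have K': "AE x in P. \<bar>x\<bar> \<le> K'" using K unfolding K'_def by (auto elim!: eventually_mono)
  have K0': "K' \<ge> 0" unfolding K'_def by simp
  interpret psi_setup P K' by (rule psi_setup.intro[OF assms(1) assms(2) K0' K'])
  show ?thesis
  proof (intro exI[of _ "3/2 * K'\<^sup>2"] conjI allI impI)
    show "0 \<le> 3/2 * K'\<^sup>2" by simp
    fix x y :: real assume xy: "0 \<le> x" "0 \<le> y"
    show "\<bar>psi P x - psi P y\<bar> \<le> 3/2 * K'\<^sup>2 * \<bar>x - y\<bar>"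
    proof (cases "x \<le> y")
      case True
      then show ?thesis using psi_lip_le[OF xy(1) True] by (simp add: abs_minus_commute)
    next
      case False
      then show ?thesis using psi_lip_le[OF xy(2), of x] by simp
    qed
  qed
qed

theorem proposition4p3:
  fixes P :: "real measure"
  assumes "prob_space P" and "sets P = sets borel"
    and "\<exists>K. AE x in P. \<bar>x\<bar> \<le> K"
  shows "viscosity_solution (hopf_lax P)
    \<and> (\<forall>h\<ge>0. hopf_lax P (0, h) = psi P h)
    \<and> lipschitz_in_h (hopf_lax P)
    \<and> (\<forall>g. viscosity_solution g \<and> (\<forall>h\<ge>0. g (0, h) = psi P h) \<and> lipschitz_in_h g
           \<longrightarrow> (\<forall>t\<ge>0. \<forall>h\<ge>0. g (t, h) = hopf_lax P (t, h)))"
proof -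
  obtain L where L: "L \<ge> 0" "\<And>x y. x \<ge> 0 \<Longrightarrow> y \<ge> 0 \<Longrightarrow> \<bar>psi P x - psi P y\<bar> \<le> L * \<bar>x - y\<bar>"
    using psi_lip[OF assms] by blast
  interpret lipfun "psi P" L by unfold_locales (use L in auto)
  have sol: "viscosity_solution (hopf_lax P)"
    unfolding viscosity_solution_def hopf_lax_HL using HL_sub HL_super by blast
  have init: "\<forall>h\<ge>0. hopf_lax P (0, h) = psi P h" unfolding hopf_lax_HL by (simp add: HL_zero)
  have lip: "lipschitz_in_h (hopf_lax P)"
    unfolding lipschitz_in_h_def hopf_lax_HL using HL_lip by blast
  have uniq: "g (t, h) = hopf_lax P (t, h)"
    if g: "viscosity_solution g" "\<forall>h\<ge>0. g (0, h) = psi P h" "lipschitz_in_h g" and th: "t \<ge> 0" "h \<ge> 0" for g t h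
  proof -
    obtain Lg where Lg: "\<And>t h h'. t \<ge> 0 \<Longrightarrow> h \<ge> 0 \<Longrightarrow> h' \<ge> 0 \<Longrightarrow> \<bar>g (t,h) - g (t,h')\<bar> \<le> Lg * \<bar>h - h'\<bar>"
      using g(3) unfolding lipschitz_in_h_def by blast
    have "g (t,h) \<le> HL (psi P) (t,h)"
      by (rule comparison[where Lu=Lg and Lv=L])
         (use g Lg HL_lip th in \<open>auto simp: viscosity_solution_def HL_zero intro: HL_super\<close>)
    moreover have "HL (psi P) (t,h) \<le> g (t,h)"
      by (rule comparison[where Lu=L and Lv=Lg])
         (use g Lg HL_lip th in \<open>auto simp: viscosity_solution_def HL_zero intro: HL_sub\<close>)
    ultimately show ?thesis unfolding hopf_lax_HL by simp
  qed
  show ?thesis using sol init lip uniq by blast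
qed

end
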